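(* Suppose that $1/n \ll \beta, \varepsilon \ll d$. Let $G[A,B]$ be a bipartite graph which is $(d, \varepsilon)$-super-regular (respectively $(d, \varepsilon)$-regular), where $|A|,|B| \le n$, and let $x_1, \dotsc, x_s$ and $y_1, \dotsc, y_t$ be positive integers each of size at least $\beta n$ such that $\sum_{i \in [s]} x_i \le |A|$ and $\sum_{j \in [t]} y_j \le |B|$. If $\{X_1, \dotsc, X_s\}$ is a collection of disjoint subsets of $A$ and $\{Y_1, \dotsc, Y_t\}$ is a collection of disjoint subsets of $B$ with $|X_i| = x_i$ and $|Y_j| = y_j$ for all $i \in [s]$, $j \in [t]$, selected uniformly at random from all such collections, then with probability at least $1 - e^{-\Omega(n)}$ the graph $G[X_i, Y_j]$ is $(d, \varepsilon')$-super-regular (respectively $(d, \varepsilon')$-regular) for all $i \in [s]$ and $j \in [t]$, where $\varepsilon' := (33 \varepsilon)^{1/5}$.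
   Context: For disjoint vertex sets $A, B$ of a graph $G$, $G[A,B]$ is the bipartite subgraph with classes $A,B$ consisting of the edges of $G$ between $A$ and $B$, and $d_G(A,B) := e(G[A,B])/(|A||B|)$. $G[A,B]$ is $(d,\varepsilon)$-regular if $d_G(X,Y) = d \pm \varepsilon$ (i.e. $d-\varepsilon \le d_G(X,Y) \le d+\varepsilon$) for all $X \subseteq A$, $Y \subseteq B$ with $|X| \ge \varepsilon|A|$, $|Y| \ge \varepsilon |B|$; it is $(\geq d,\varepsilon)$-regular if it is $(d',\varepsilon)$-regular for some $d' \ge d$; it is $(d,\varepsilon)$-super-regular if it is $(\geq d,\varepsilon)$-regular, every vertex of $A$ has at least $(d-\varepsilon)|B|$ neighbours in $B$ and every vertex of $B$ has at least $(d-\varepsilon)|A|$ neighbours in $A$. Notation $x \ll y$ means: for every $y>0$ there is $x_0>0$ such that the statement holds whenever $0 < x \le x_0$; hierarchies with more constants are read similarly, constants being chosen from right to left (so $1/n \ll \cdot$ means $n$ is sufficiently large). $[n] = \{1,\dots,n\}$. *)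

theory Defs
  imports Complex_Main
begin

text \<open>A bipartite graph G[A,B] is given by an adjacency relation E; only pairs
(a,b) with a in A and b in B matter.\<close>

definition edges_between :: "('a \<Rightarrow> 'a \<Rightarrow> bool) \<Rightarrow> 'a set \<Rightarrow> 'a set \<Rightarrow> ('a \<times> 'a) set" where
  "edges_between E X Y = {(a, b). a \<in> X \<and> b \<in> Y \<and> E a b}"

definition dens :: "('a \<Rightarrow> 'a \<Rightarrow> bool) \<Rightarrow> 'a set \<Rightarrow> 'a set \<Rightarrow> real" where
  "dens E X Y = real (card (edges_between E X Y)) / (real (card X) * real (card Y))"

definition regular_pair :: "('a \<Rightarrow> 'a \<Rightarrow> bool) \<Rightarrow> 'a set \<Rightarrow> 'a set \<Rightarrow> real \<Rightarrow> real \<Rightarrow> bool" where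
  "regular_pair E A B d eps \<longleftrightarrow>
     (\<forall>X Y. X \<subseteq> A \<longrightarrow> Y \<subseteq> B \<longrightarrow> real (card X) \<ge> eps * real (card A)
        \<longrightarrow> real (card Y) \<ge> eps * real (card B)
        \<longrightarrow> d - eps \<le> dens E X Y \<and> dens E X Y \<le> d + eps)"

definition regular_pair_ge :: "('a \<Rightarrow> 'a \<Rightarrow> bool) \<Rightarrow> 'a set \<Rightarrow> 'a set \<Rightarrow> real \<Rightarrow> real \<Rightarrow> bool" where
  "regular_pair_ge E A B d eps \<longleftrightarrow> (\<exists>d'. d' \<ge> d \<and> regular_pair E A B d' eps)"

definition super_regular_pair :: "('a \<Rightarrow> 'a \<Rightarrow> bool) \<Rightarrow> 'a set \<Rightarrow> 'a set \<Rightarrow> real \<Rightarrow> real \<Rightarrow> bool" where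
  "super_regular_pair E A B d eps \<longleftrightarrow>
     regular_pair_ge E A B d eps \<and>
     (\<forall>a\<in>A. real (card {b\<in>B. E a b}) \<ge> (d - eps) * real (card B)) \<and>
     (\<forall>b\<in>B. real (card {a\<in>A. E a b}) \<ge> (d - eps) * real (card A))"

definition collections :: "'a set \<Rightarrow> nat \<Rightarrow> (nat \<Rightarrow> nat) \<Rightarrow> (nat \<Rightarrow> 'a set) set" where
  "collections A s x = {X. (\<forall>i\<in>{1..s}. X i \<subseteq> A \<and> card (X i) = x i)
       \<and> (\<forall>i\<in>{1..s}. \<forall>j\<in>{1..s}. i \<noteq> j \<longrightarrow> X i \<inter> X j = {})
       \<and> (\<forall>i. i \<notin> {1..s} \<longrightarrow> X i = {})}"

definition unif_prob :: "'b set \<Rightarrow> ('b \<Rightarrow> bool) \<Rightarrow> real" where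
  "unif_prob S P = real (card {z\<in>S. P z}) / real (card S)"

end

theory Submission
  imports Defs
begin

definition msub :: "'a set \<Rightarrow> nat \<Rightarrow> 'a set set" where
  "msub B m = {S. S \<subseteq> B \<and> card S = m}"

lemma card_msub: "finite B \<Longrightarrow> card (msub B m) = card B choose m"
  unfolding msub_def by (rule n_subsets)

lemma finite_msub: "finite B \<Longrightarrow> finite (msub B m)"
  unfolding msub_def by auto

lemma bsuc: "real (Suc k) * real (n choose Suc k) = real (n choose k) * (real n - real k)"
proof (cases "k \<le> n")
  case True
  have "Suc k * (n choose Suc k) = n * ((n - 1) choose k)" by (rule binomial_absorption)
  also have "\<dots> = (n - k) * (n choose k)" by (rule binomial_absorb_comp[symmetric])
  finally have "real (Suc k * (n choose Suc k)) = real ((n - k) * (n choose k))" by simp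
  then show ?thesis using True by (simp add: of_nat_diff algebra_simps)
next
  case False
  then show ?thesis by (simp add: binomial_eq_0)
qed

lemma binom_ratio:
  assumes "t \<le> N"
  shows "real (t choose k) * real N ^ k \<le> real t ^ k * real (N choose k)"
proof (induction k)
  case 0 then show ?case by simp
next
  case (Suc k)
  have pos: "0 < real (Suc k)" by simp
  show ?case
  proof (cases "k < t")
    case False
    have z: "t choose Suc k = 0" using False by (simp add: binomial_eq_0)
    show ?thesis by (simp only: z) simp
  next
    case True
    have kN: "k < N" using True assms by simp
    have a: "real (t choose k) * real N ^ k \<le> real t ^ k * real (N choose k)" by (rule Suc.IH)
    have b: "(real t - real k) * real N \<le> real t * (real N - real k)"
    proof -
      have "real k * real t \<le> real k * real N" using assms by (intro mult_left_mono) auto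
      then show ?thesis by (simp add: algebra_simps)
    qed
    have c: "0 \<le> (real t - real k) * real N" using True by simp
    have "real (Suc k) * (real (t choose Suc k) * real N ^ Suc k)
        = (real (Suc k) * real (t choose Suc k)) * (real N * real N ^ k)"
      by (simp only: power_Suc ac_simps)
    also have "\<dots> = (real (t choose k) * (real t - real k)) * (real N * real N ^ k)"
      by (simp only: bsuc)
    also have "\<dots> = (real (t choose k) * real N ^ k) * ((real t - real k) * real N)"
      by (simp only: ac_simps)
    also have "\<dots> \<le> (real t ^ k * real (N choose k)) * ((real t - real k) * real N)"
      by (rule mult_right_mono[OF a c])
    also have "\<dots> \<le> (real t ^ k * real (N choose k)) * (real t * (real N - real k))"
      by (rule mult_left_mono[OF b]) simp
    also have "\<dots> = real t ^ Suc k * (real (N choose k) * (real N - real k))"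
      by (simp only: power_Suc ac_simps)
    also have "\<dots> = real t ^ Suc k * (real (Suc k) * real (N choose Suc k))"
      by (simp only: bsuc)
    also have "\<dots> = real (Suc k) * (real t ^ Suc k * real (N choose Suc k))"
      by (simp only: ac_simps)
    finally show ?thesis using pos by simp
  qed
qed

lemma ratio_main:
  fixes p lam :: real
  assumes p: "0 \<le> p" "p \<le> 1" and lam: "0 < lam" and lam1: "lam \<le> 1" and k1: "real k1 \<ge> (p + lam) * real m"
  shows "real k \<le> lam * real m / 2 \<Longrightarrow>
     real (m choose k) * p ^ k \<le> (1 / (1 + lam / 2)) ^ k * real (k1 choose k)"
proof (induction k)
  case 0 then show ?case by simp
next
  case (Suc k)
  define \<rho> where "\<rho> = 1 / (1 + lam / 2)"
  have rpos: "0 < \<rho>" using lam by (simp add: \<rho>_def)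
  have km: "real k < lam * real m / 2" using Suc.prems by simp
  have IH: "real (m choose k) * p ^ k \<le> \<rho> ^ k * real (k1 choose k)"
    using Suc.IH Suc.prems unfolding \<rho>_def by simp
  have mm: "real k \<le> real m"
  proof -
    have "lam * real m \<le> 1 * real m" using lam1 by (intro mult_right_mono) auto
    then show ?thesis using km by linarith
  qed
  have step: "p * (real m - real k) \<le> \<rho> * (real k1 - real k)"
  proof -
    have "p * (real m - real k) * (1 + lam / 2) \<le> p * real m * (1 + lam/2)"
      using p lam by (intro mult_right_mono mult_left_mono) auto
    also have "\<dots> = p * real m + p * (lam * real m / 2)" by (simp add: algebra_simps)
    also have "\<dots> \<le> p * real m + 1 * (lam * real m / 2)"
      using p lam by (intro add_left_mono mult_right_mono) auto
    also have "\<dots> = p * real m + lam * real m / 2" by simp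
    also have "\<dots> \<le> real k1 - real k" using k1 km by (simp add: algebra_simps)
    finally show ?thesis using lam unfolding \<rho>_def by (simp add: field_simps)
  qed
  have c1: "0 \<le> p * (real m - real k)"
    using p mm by simp
  have "real (Suc k) * (real (m choose Suc k) * p ^ Suc k)
        = (real (Suc k) * real (m choose Suc k)) * (p * p ^ k)"
    by (simp only: power_Suc ac_simps)
  also have "\<dots> = (real (m choose k) * (real m - real k)) * (p * p ^ k)"
    by (simp only: bsuc)
  also have "\<dots> = (real (m choose k) * p ^ k) * (p * (real m - real k))"
    by (simp only: ac_simps)
  also have "\<dots> \<le> (\<rho> ^ k * real (k1 choose k)) * (p * (real m - real k))"
    by (rule mult_right_mono[OF IH c1])
  also have "\<dots> \<le> (\<rho> ^ k * real (k1 choose k)) * (\<rho> * (real k1 - real k))"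
    by (rule mult_left_mono[OF step]) (use rpos in simp)
  also have "\<dots> = \<rho> ^ Suc k * (real (k1 choose k) * (real k1 - real k))"
    by (simp only: power_Suc ac_simps)
  also have "\<dots> = \<rho> ^ Suc k * (real (Suc k) * real (k1 choose Suc k))"
    by (simp only: bsuc)
  also have "\<dots> = real (Suc k) * (\<rho> ^ Suc k * real (k1 choose Suc k))"
    by (simp only: ac_simps)
  finally have "real (Suc k) * (real (m choose Suc k) * p ^ Suc k)
      \<le> real (Suc k) * (\<rho> ^ Suc k * real (k1 choose Suc k))" .
  then have "real (m choose Suc k) * p ^ Suc k \<le> \<rho> ^ Suc k * real (k1 choose Suc k)"
    by (rule mult_left_le_imp_le) simp
  then show ?case unfolding \<rho>_def .
qed

lemma sum_card_swap:
  assumes "finite U" "finite V"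
  shows "(\<Sum>S\<in>U. card {Z\<in>V. P S Z}) = (\<Sum>Z\<in>V. card {S\<in>U. P S Z})"
proof -
  have "(\<Sum>S\<in>U. card {Z\<in>V. P S Z}) = (\<Sum>S\<in>U. \<Sum>Z\<in>V. if P S Z then 1 else 0)"
    using assms by (simp add: sum.inter_filter[symmetric])
  also have "\<dots> = (\<Sum>Z\<in>V. \<Sum>S\<in>U. if P S Z then 1 else 0)" by (rule sum.swap)
  also have "\<dots> = (\<Sum>Z\<in>V. card {S\<in>U. P S Z})"
    using assms by (simp add: sum.inter_filter[symmetric])
  finally show ?thesis .
qed

lemma dc:
  assumes B: "finite B" and T: "T \<subseteq> B" and km: "k \<le> m"
  shows "(\<Sum>S\<in>msub B m. card (S \<inter> T) choose k) \<le> (card T choose k) * ((card B - k) choose (m - k))"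
proof -
  have fT: "finite T" using B T finite_subset by blast
  have eq1: "card (S \<inter> T) choose k = card {Z\<in>msub T k. Z \<subseteq> S}" if "S \<in> msub B m" for S
  proof -
    have "msub (S \<inter> T) k = {Z\<in>msub T k. Z \<subseteq> S}" unfolding msub_def by auto
    moreover have "finite (S \<inter> T)" using fT by simp
    ultimately show ?thesis using card_msub by metis
  qed
  have "(\<Sum>S\<in>msub B m. card (S \<inter> T) choose k) = (\<Sum>S\<in>msub B m. card {Z\<in>msub T k. Z \<subseteq> S})"
    using eq1 by (rule sum.cong[OF refl])
  also have "\<dots> = (\<Sum>Z\<in>msub T k. card {S\<in>msub B m. Z \<subseteq> S})"
    by (rule sum_card_swap) (use B fT finite_msub in auto)
  also have "\<dots> \<le> (\<Sum>Z\<in>msub T k. (card B - k) choose (m - k))"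
  proof (rule sum_mono)
    fix Z assume Z: "Z \<in> msub T k"
    then have ZB: "Z \<subseteq> B" and cZ: "card Z = k" using T unfolding msub_def by auto
    have fZ: "finite Z" using ZB B finite_subset by blast
    have "card {S\<in>msub B m. Z \<subseteq> S} \<le> card (msub (B - Z) (m - k))"
    proof (rule card_inj_on_le[where f = "\<lambda>S. S - Z"])
      show "inj_on (\<lambda>S. S - Z) {S \<in> msub B m. Z \<subseteq> S}"
        by (rule inj_onI) auto
      show "(\<lambda>S. S - Z) ` {S \<in> msub B m. Z \<subseteq> S} \<subseteq> msub (B - Z) (m - k)"
      proof
        fix X assume "X \<in> (\<lambda>S. S - Z) ` {S \<in> msub B m. Z \<subseteq> S}"
        then obtain S where S: "S \<in> msub B m" "Z \<subseteq> S" and X: "X = S - Z" by auto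
        have "card (S - Z) = card S - card Z" using S fZ by (simp add: card_Diff_subset)
        then show "X \<in> msub (B - Z) (m - k)" using S X cZ unfolding msub_def by auto
      qed
      show "finite (msub (B - Z) (m - k))" using B by (simp add: finite_msub)
    qed
    also have "\<dots> = card (B - Z) choose (m - k)" using B by (simp add: card_msub)
    also have "card (B - Z) = card B - k" using ZB fZ cZ by (simp add: card_Diff_subset)
    finally show "card {S\<in>msub B m. Z \<subseteq> S} \<le> (card B - k) choose (m - k)" .
  qed
  also have "\<dots> = (card T choose k) * ((card B - k) choose (m - k))"
    using fT by (simp add: card_msub)
  finally show ?thesis .
qed

lemma exp_bound_rho:
  fixes lam :: real
  assumes "0 < lam" "lam \<le> 1" "real k \<ge> lam * real m / 2 - 1"
  shows "(1 / (1 + lam / 2)) ^ k \<le> exp (1 - lam^2 * real m / 8)"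
proof -
  have "lam / 2 - (lam/2)^2 \<le> ln (1 + lam / 2)"
    using assms by (intro ln_one_plus_pos_lower_bound) auto
  moreover have "lam / 4 \<le> lam / 2 - (lam/2)^2"
    using assms by (simp add: power2_eq_square)
  ultimately have l: "lam / 4 \<le> ln (1 + lam / 2)" by linarith
  have "exp (lam / 4) \<le> 1 + lam / 2"
    using l assms by (metis exp_le_cancel_iff exp_ln add_pos_pos zero_less_one half_gt_zero)
  then have "exp (lam / 4) ^ k \<le> (1 + lam / 2) ^ k" by (rule power_mono) simp
  moreover have "exp (real k * (lam / 4)) = exp (lam / 4) ^ k" by (rule exp_of_nat_mult)
  ultimately have e: "exp (real k * (lam / 4)) \<le> (1 + lam / 2) ^ k" by simp
  have "(1 / (1 + lam / 2)) ^ k = 1 / (1 + lam / 2) ^ k" by (simp add: power_one_over)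
  also have "\<dots> \<le> 1 / exp (real k * (lam / 4))"
  proof -
    have "0 < 1 + lam / 2" using assms by simp
    then have pa: "0 < (1 + lam / 2) ^ k" by simp
    have pb: "0 < exp (real k * (lam / 4))" by simp
    show ?thesis
      apply (rule divide_left_mono[OF e])
       apply simp
      by (rule mult_pos_pos[OF pa pb])
  qed
  also have "\<dots> = exp (- (real k * (lam / 4)))" by (simp add: exp_minus field_simps)
  also have "\<dots> \<le> exp (1 - lam^2 * real m / 8)"
  proof -
    have h1: "(lam * real m / 2 - 1) * (lam / 4) \<le> real k * (lam / 4)"
      using assms by (intro mult_right_mono) auto
    have h2: "(lam * real m / 2 - 1) * (lam / 4) = lam^2 * real m / 8 - lam / 4"
      by (simp add: power2_eq_square field_simps)
    have "- (real k * (lam / 4)) \<le> 1 - lam^2 * real m / 8" using h1 h2 assms by linarith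
    then show ?thesis by (subst exp_le_cancel_iff)
  qed
  finally show ?thesis .
qed

lemma hyper_tail:
  fixes lam :: real
  assumes B: "finite B" and T: "T \<subseteq> B" and N: "card B > 0" and mN: "m \<le> card B"
    and lam: "0 < lam" "lam \<le> 1"
  shows "real (card {S\<in>msub B m. real (card (S \<inter> T)) \<ge> (real (card T) / real (card B) + lam) * real m})
         \<le> exp (1 - lam^2 * real m / 8) * real (card B choose m)"
proof -
  define N where "N = card B"
  define t where "t = card T"
  define p where "p = real t / real N"
  define k where "k = nat \<lfloor>lam * real m / 2\<rfloor>"
  define k1 where "k1 = nat \<lceil>(p + lam) * real m\<rceil>"
  define Bad where "Bad = {S\<in>msub B m. real (card (S \<inter> T)) \<ge> (p + lam) * real m}"
  have tN: "t \<le> N" unfolding t_def N_def using T B card_mono by blast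
  have Npos: "0 < N" using N N_def by simp
  have p0: "0 \<le> p" and p1: "p \<le> 1" using tN Npos by (auto simp: p_def)
  have x0: "0 \<le> lam * real m / 2" using lam by simp
  then have kre: "real k = real_of_int \<lfloor>lam * real m / 2\<rfloor>" unfolding k_def by simp
  have kr: "real k \<le> lam * real m / 2" using kre of_int_floor_le[of "lam * real m / 2"] by linarith
  have kr2: "real k \<ge> lam * real m / 2 - 1" using kre real_of_int_floor_gt_diff_one[of "lam * real m / 2"] by linarith
  have km: "k \<le> m"
  proof -
    have "lam * real m \<le> 1 * real m" using lam by (intro mult_right_mono) auto
    then have "lam * real m / 2 \<le> real m" by simp
    then show ?thesis using kr by linarith
  qed
  have kN: "k \<le> N" using km mN N_def by simp
  have k1r: "real k1 \<ge> (p + lam) * real m" unfolding k1_def by linarith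
  have kk1: "k \<le> k1"
  proof -
    have "lam * real m / 2 \<le> (p + lam) * real m" using p0 lam
      by (simp add: algebra_simps mult_left_mono)
    then show ?thesis using kr k1r by linarith
  qed
  have fin: "finite (msub B m)" using B by (simp add: finite_msub)
  have Badsub: "Bad \<subseteq> msub B m" unfolding Bad_def by auto
  have "card Bad * (k1 choose k) = (\<Sum>S\<in>Bad. k1 choose k)" by simp
  also have "\<dots> \<le> (\<Sum>S\<in>Bad. card (S \<inter> T) choose k)"
  proof (rule sum_mono)
    fix S assume "S \<in> Bad"
    then have "real k1 \<le> real (card (S \<inter> T))"
      unfolding Bad_def k1_def by (simp add: ceiling_le_iff)
    then show "k1 choose k \<le> card (S \<inter> T) choose k" by (simp add: binomial_right_mono)
  qed
  also have "\<dots> \<le> (\<Sum>S\<in>msub B m. card (S \<inter> T) choose k)"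
    by (rule sum_mono2[OF fin Badsub]) simp
  also have "\<dots> \<le> (t choose k) * ((N - k) choose (m - k))"
    unfolding t_def N_def by (rule dc[OF B T km])
  finally have c1: "real (card Bad) * real (k1 choose k) \<le> real (t choose k) * real ((N - k) choose (m - k))"
    by (metis of_nat_le_iff of_nat_mult)
  have cm: "real (N choose m) * real (m choose k) = real (N choose k) * real ((N - k) choose (m - k))"
    using choose_mult[OF km] mN N_def by (metis of_nat_mult)
  have br: "real (t choose k) * real N ^ k \<le> real t ^ k * real (N choose k)"
    by (rule binom_ratio[OF tN])
  have tk: "real (t choose k) \<le> p ^ k * real (N choose k)"
  proof -
    have "real N ^ k > 0" using Npos by simp
    then show ?thesis using br unfolding p_def by (simp add: power_divide field_simps)
  qed
  have NkPos: "real (N choose k) > 0" using kN by simp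
  have "real (card Bad) * real (k1 choose k) * real (N choose k)
       \<le> real (t choose k) * real ((N - k) choose (m - k)) * real (N choose k)"
    using c1 by (intro mult_right_mono) auto
  also have "\<dots> = real (t choose k) * (real (N choose m) * real (m choose k))"
    using cm by (simp add: ac_simps)
  also have "\<dots> \<le> p ^ k * real (N choose k) * (real (N choose m) * real (m choose k))"
    using tk by (intro mult_right_mono) auto
  finally have c2: "real (card Bad) * real (k1 choose k) \<le> p ^ k * real (N choose m) * real (m choose k)"
    using NkPos by (simp add: ac_simps mult_le_cancel_right_pos)
  have rm: "real (m choose k) * p ^ k \<le> (1 / (1 + lam / 2)) ^ k * real (k1 choose k)"
    by (rule ratio_main[OF p0 p1 lam k1r kr])
  have "real (card Bad) * real (k1 choose k) \<le> real (N choose m) * ((1 / (1 + lam / 2)) ^ k * real (k1 choose k))"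
    using c2 rm by (smt (verit, best) mult.commute mult.left_commute mult_left_mono of_nat_0_le_iff)
  then have "real (card Bad) \<le> real (N choose m) * (1 / (1 + lam / 2)) ^ k"
    using kk1 by (simp add: ac_simps mult_le_cancel_right_pos)
  also have "\<dots> \<le> real (N choose m) * exp (1 - lam^2 * real m / 8)"
    by (intro mult_left_mono exp_bound_rho) (use lam kr2 in auto)
  finally show ?thesis unfolding Bad_def p_def t_def N_def by (simp add: ac_simps)
qed

lemma cnt_bounds:
  fixes x :: real
  assumes "0 \<le> x" "x \<le> real K"
  shows "x \<le> real (card {k\<in>{..<K}. real k < x})" "real (card {k\<in>{..<K}. real k < x}) \<le> x + 1"
proof -
  have c1: "\<lceil>x\<rceil> \<le> int K" using assms(2) by (simp add: ceiling_le_iff)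
  have c0: "0 \<le> \<lceil>x\<rceil>" using assms(1) by simp
  have iff: "(k < nat \<lceil>x\<rceil>) = (real k < x)" for k
  proof -
    have "(k < nat \<lceil>x\<rceil>) = (int k < \<lceil>x\<rceil>)" using c0 by linarith
    also have "\<dots> = (real_of_int (int k) < x)" by (rule less_ceiling_iff)
    finally show ?thesis by simp
  qed
  have eq: "{k\<in>{..<K}. real k < x} = {..<nat \<lceil>x\<rceil>}"
  proof (rule set_eqI)
    fix k
    show "(k \<in> {k\<in>{..<K}. real k < x}) = (k \<in> {..<nat \<lceil>x\<rceil>})"
      using iff[of k] c1 by auto
  qed
  have r: "real (nat \<lceil>x\<rceil>) = real_of_int \<lceil>x\<rceil>" using c0 by simp
  show "x \<le> real (card {k\<in>{..<K}. real k < x})" unfolding eq using r le_of_int_ceiling[of x] by simp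
  show "real (card {k\<in>{..<K}. real k < x}) \<le> x + 1" unfolding eq using r ceiling_correct[of x] by simp
qed

lemma upper_tail:
  fixes lam :: real and g :: "'a \<Rightarrow> real"
  assumes B: "finite B" and N: "card B > 0" and mN: "m \<le> card B"
    and lam: "0 < lam" "lam \<le> 1" and g: "\<And>b. b \<in> B \<Longrightarrow> 0 \<le> g b \<and> g b \<le> 1"
  shows "real (card {S\<in>msub B m. (\<Sum>b\<in>S. g b) > real m / real (card B) * (\<Sum>b\<in>B. g b) + 2 * lam * real m})
     \<le> real (nat \<lceil>1 / lam\<rceil>) * exp (1 - lam^2 * real m / 8) * real (card B choose m)"
proof -
  define N where "N = card B"
  define K where "K = nat \<lceil>1 / lam\<rceil>"
  have Kr: "1 / lam \<le> real K" unfolding K_def by linarith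
  have K1: "1 \<le> real K" using Kr lam by (smt (verit) le_divide_eq_1_pos)
  have Kl: "1 / real K \<le> lam" using Kr K1 lam by (simp add: field_simps)
  define T where "T k = {b\<in>B. real k < real K * g b}" for k
  define cnt where "cnt b = card {k\<in>{..<K}. real k < real K * g b}" for b
  have Npos: "0 < real N" using N N_def by simp
  have gK: "0 \<le> real K * g b \<and> real K * g b \<le> real K" if "b \<in> B" for b
    using g[OF that] K1 by (simp add: mult_left_le)
  have cntlo: "real K * g b \<le> real (cnt b)" if "b \<in> B" for b
    unfolding cnt_def using cnt_bounds(1) gK[OF that] by blast
  have cnthi: "real (cnt b) \<le> real K * g b + 1" if "b \<in> B" for b
    unfolding cnt_def using cnt_bounds(2) gK[OF that] by blast
  have swap: "(\<Sum>k<K. card (S \<inter> T k)) = (\<Sum>b\<in>S. cnt b)" if "S \<subseteq> B" for S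
  proof -
    have fS: "finite S" using that B finite_subset by blast
    have "(\<Sum>k<K. card (S \<inter> T k)) = (\<Sum>k\<in>{..<K}. card {b\<in>S. real k < real K * g b})"
      by (rule sum.cong) (use that in \<open>auto simp: T_def intro!: arg_cong[where f=card]\<close>)
    also have "\<dots> = (\<Sum>b\<in>S. card {k\<in>{..<K}. real k < real K * g b})"
      by (rule sum_card_swap[symmetric]) (use fS in auto)
    finally show ?thesis unfolding cnt_def .
  qed
  have SB1: "(\<Sum>k<K. real (card (B \<inter> T k))) \<le> real K * (\<Sum>b\<in>B. g b) + real N"
  proof -
    have "(\<Sum>k<K. real (card (B \<inter> T k))) = (\<Sum>b\<in>B. real (cnt b))"
      using swap[of B] by (simp del: of_nat_sum add: of_nat_sum[symmetric])
    also have "\<dots> \<le> (\<Sum>b\<in>B. real K * g b + 1)" using cnthi by (intro sum_mono) auto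
    also have "\<dots> = real K * (\<Sum>b\<in>B. g b) + real N" by (simp add: sum.distrib sum_distrib_left N_def)
    finally show ?thesis .
  qed
  define Bad where "Bad k = {S\<in>msub B m. real (card (S \<inter> T k)) \<ge> (real (card (T k)) / real N + lam) * real m}" for k
  have sub: "{S\<in>msub B m. (\<Sum>b\<in>S. g b) > real m / real N * (\<Sum>b\<in>B. g b) + 2 * lam * real m}
      \<subseteq> (\<Union>k\<in>{..<K}. Bad k)"
  proof (rule subsetI, rule ccontr)
    fix S assume S: "S \<in> {S\<in>msub B m. (\<Sum>b\<in>S. g b) > real m / real N * (\<Sum>b\<in>B. g b) + 2 * lam * real m}"
      and nb: "S \<notin> (\<Union>k\<in>{..<K}. Bad k)"
    have SB: "S \<subseteq> B" and cS: "card S = m" using S unfolding msub_def by auto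
    have good: "real (card (S \<inter> T k)) \<le> (real (card (T k)) / real N + lam) * real m" if "k < K" for k
    proof -
      have "\<not> ((real (card (T k)) / real N + lam) * real m \<le> real (card (S \<inter> T k)))"
        using nb S that unfolding Bad_def by auto
      then show ?thesis by linarith
    qed
    have "real K * (\<Sum>b\<in>S. g b) = (\<Sum>b\<in>S. real K * g b)" by (simp add: sum_distrib_left)
    also have "\<dots> \<le> (\<Sum>b\<in>S. real (cnt b))" using SB cntlo by (intro sum_mono) auto
    also have "\<dots> = real (\<Sum>k<K. card (S \<inter> T k))" using swap[OF SB] by simp
    also have "\<dots> = (\<Sum>k<K. real (card (S \<inter> T k)))" by simp
    also have "\<dots> \<le> (\<Sum>k<K. (real (card (T k)) / real N + lam) * real m)"
      using good by (intro sum_mono) auto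
    also have "\<dots> = real m / real N * (\<Sum>k<K. real (card (B \<inter> T k))) + real K * lam * real m"
      by (simp add: sum.distrib sum_distrib_left sum_divide_distrib algebra_simps T_def)
          (simp add: Int_def conj_commute)
    also have "\<dots> \<le> real m / real N * (real K * (\<Sum>b\<in>B. g b) + real N) + real K * lam * real m"
      using SB1 by (intro add_right_mono mult_left_mono) auto
    finally have ineq: "real K * (\<Sum>b\<in>S. g b)
        \<le> real m / real N * (real K * (\<Sum>b\<in>B. g b) + real N) + real K * lam * real m" .
    have "real m / real N * (real K * (\<Sum>b\<in>B. g b) + real N) + real K * lam * real m
        = real K * (real m / real N * (\<Sum>b\<in>B. g b) + real m / real K + lam * real m)"
      using Npos K1 by (simp add: field_simps)
    also have "\<dots> \<le> real K * (real m / real N * (\<Sum>b\<in>B. g b) + 2 * lam * real m)"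
    proof -
      have "real m / real K \<le> lam * real m"
        using Kl by (metis divide_inverse mult.commute mult_right_mono of_nat_0_le_iff inverse_eq_divide)
      then show ?thesis using K1 by (intro mult_left_mono) auto
    qed
    finally have "(\<Sum>b\<in>S. g b) \<le> real m / real N * (\<Sum>b\<in>B. g b) + 2 * lam * real m"
      using ineq K1 by (smt (verit) mult_le_cancel_left_pos)
    then show False using S by (simp add: N_def)
  qed
  have fin: "finite (msub B m)" using B finite_msub by blast
  have "real (card {S\<in>msub B m. (\<Sum>b\<in>S. g b) > real m / real N * (\<Sum>b\<in>B. g b) + 2 * lam * real m})
      \<le> real (card (\<Union>k\<in>{..<K}. Bad k))"
    using sub by (intro of_nat_mono card_mono) (auto simp: Bad_def intro: finite_subset[OF _ fin])
  also have "\<dots> \<le> real (\<Sum>k<K. card (Bad k))" by (intro of_nat_mono card_UN_le) simp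
  also have "\<dots> = (\<Sum>k<K. real (card (Bad k)))" by simp
  also have "\<dots> \<le> (\<Sum>k<K. exp (1 - lam^2 * real m / 8) * real (N choose m))"
  proof (rule sum_mono)
    fix k assume "k \<in> {..<K}"
    have "T k \<subseteq> B" unfolding T_def by auto
    then show "real (card (Bad k)) \<le> exp (1 - lam^2 * real m / 8) * real (N choose m)"
      unfolding Bad_def N_def by (rule hyper_tail[OF B _ N mN lam])
  qed
  also have "\<dots> = real K * exp (1 - lam^2 * real m / 8) * real (N choose m)" by simp
  finally show ?thesis unfolding K_def N_def .
qed


definition cbound :: "real \<Rightarrow> nat \<Rightarrow> real" where
  "cbound lam m = 2 * real (nat \<lceil>1 / lam\<rceil>) * exp (1 - lam^2 * real m / 8)"

lemma lin1: fixes L a b m :: real shows "4 * L < a - b \<Longrightarrow> (b + m) / 2 + 2 * L < (a + m) / 2" by (simp add: field_simps)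
lemma lin2: fixes L a b m :: real shows "4 * L < - (a - b) \<Longrightarrow> (m - b) / 2 + 2 * L < (m - a) / 2" by (simp add: field_simps)

lemma conc:
  fixes lam :: real and g :: "'a \<Rightarrow> real"
  assumes B: "finite B" and N: "card B > 0" and mN: "m \<le> card B"
    and lam: "0 < lam" "lam \<le> 1" and g: "\<And>b. b \<in> B \<Longrightarrow> \<bar>g b\<bar> \<le> 1"
  shows "real (card {S\<in>msub B m. \<bar>(\<Sum>b\<in>S. g b) - real m / real (card B) * (\<Sum>b\<in>B. g b)\<bar> > 4 * lam * real m})
     \<le> cbound lam m * real (card B choose m)"
proof -
  define N where "N = card B"
  define g1 where "g1 b = (g b + 1) / 2" for b
  define g2 where "g2 b = (1 - g b) / 2" for b
  have Npos: "0 < real N" using N N_def by simp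
  have g1r: "0 \<le> g1 b \<and> g1 b \<le> 1" if "b \<in> B" for b using g[OF that] unfolding g1_def by auto
  have g2r: "0 \<le> g2 b \<and> g2 b \<le> 1" if "b \<in> B" for b using g[OF that] unfolding g2_def by auto
  define U1 where "U1 = {S\<in>msub B m. (\<Sum>b\<in>S. g1 b) > real m / real N * (\<Sum>b\<in>B. g1 b) + 2 * lam * real m}"
  define U2 where "U2 = {S\<in>msub B m. (\<Sum>b\<in>S. g2 b) > real m / real N * (\<Sum>b\<in>B. g2 b) + 2 * lam * real m}"
  have sB1: "(\<Sum>b\<in>B. g1 b) = ((\<Sum>b\<in>B. g b) + real N) / 2"
    unfolding g1_def N_def by (simp add: sum_divide_distrib[symmetric] sum.distrib)
  have sB2: "(\<Sum>b\<in>B. g2 b) = (real N - (\<Sum>b\<in>B. g b)) / 2"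
    unfolding g2_def N_def by (simp add: sum_divide_distrib[symmetric] sum_subtractf)
  have mNr: "real m / real N * real N = real m" using Npos by simp
  have sub: "{S\<in>msub B m. \<bar>(\<Sum>b\<in>S. g b) - real m / real N * (\<Sum>b\<in>B. g b)\<bar> > 4 * lam * real m} \<subseteq> U1 \<union> U2"
  proof
    fix S assume S: "S \<in> {S\<in>msub B m. \<bar>(\<Sum>b\<in>S. g b) - real m / real N * (\<Sum>b\<in>B. g b)\<bar> > 4 * lam * real m}"
    then have Sm: "S \<in> msub B m" and cS: "card S = m" unfolding msub_def by auto
    have sS1: "(\<Sum>b\<in>S. g1 b) = ((\<Sum>b\<in>S. g b) + real m) / 2"
      unfolding g1_def using cS by (simp add: sum_divide_distrib[symmetric] sum.distrib)
    have sS2: "(\<Sum>b\<in>S. g2 b) = (real m - (\<Sum>b\<in>S. g b)) / 2"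
      unfolding g2_def using cS by (simp add: sum_divide_distrib[symmetric] sum_subtractf)
    have e1: "real m / real N * (\<Sum>b\<in>B. g1 b) = (real m / real N * (\<Sum>b\<in>B. g b) + real m) / 2"
      unfolding sB1 using Npos by (simp add: field_simps)
    have e2: "real m / real N * (\<Sum>b\<in>B. g2 b) = (real m - real m / real N * (\<Sum>b\<in>B. g b)) / 2"
      unfolding sB2 using Npos by (simp add: field_simps)
    show "S \<in> U1 \<union> U2"
    proof (cases "(\<Sum>b\<in>S. g b) - real m / real N * (\<Sum>b\<in>B. g b) \<ge> 0")
      case True
      then have "(\<Sum>b\<in>S. g b) - real m / real N * (\<Sum>b\<in>B. g b) > 4 * lam * real m" using S by simp
      then have "(\<Sum>b\<in>S. g1 b) > real m / real N * (\<Sum>b\<in>B. g1 b) + 2 * lam * real m"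
        unfolding sS1 e1 by (simp only: mult.assoc) (rule lin1)
      then show ?thesis using Sm unfolding U1_def by simp
    next
      case False
      then have "- ((\<Sum>b\<in>S. g b) - real m / real N * (\<Sum>b\<in>B. g b)) > 4 * lam * real m" using S by simp
      then have "(\<Sum>b\<in>S. g2 b) > real m / real N * (\<Sum>b\<in>B. g2 b) + 2 * lam * real m"
        unfolding sS2 e2 by (simp only: mult.assoc) (rule lin2)
      then show ?thesis using Sm unfolding U2_def by simp
    qed
  qed
  have "real (card {S\<in>msub B m. \<bar>(\<Sum>b\<in>S. g b) - real m / real N * (\<Sum>b\<in>B. g b)\<bar> > 4 * lam * real m})
       \<le> real (card (U1 \<union> U2))"
  proof -
    have "finite (U1 \<union> U2)" unfolding U1_def U2_def using finite_msub[OF B] by simp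
    then show ?thesis using sub by (intro of_nat_mono card_mono)
  qed
  also have "\<dots> \<le> real (card U1) + real (card U2)" using card_Un_le[of U1 U2] by linarith
  also have "\<dots> \<le> real (nat \<lceil>1 / lam\<rceil>) * exp (1 - lam^2 * real m / 8) * real (card B choose m)
       + real (nat \<lceil>1 / lam\<rceil>) * exp (1 - lam^2 * real m / 8) * real (card B choose m)"
  proof (rule add_mono)
    show "real (card U1) \<le> real (nat \<lceil>1 / lam\<rceil>) * exp (1 - lam^2 * real m / 8) * real (card B choose m)"
      unfolding U1_def N_def by (rule upper_tail[OF B N mN lam g1r])
    show "real (card U2) \<le> real (nat \<lceil>1 / lam\<rceil>) * exp (1 - lam^2 * real m / 8) * real (card B choose m)"
      unfolding U2_def N_def by (rule upper_tail[OF B N mN lam g2r])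
  qed
  finally show ?thesis unfolding cbound_def N_def by (simp add: ac_simps)
qed

lemma conc_multi:
  fixes lam :: real and g :: "'i \<Rightarrow> 'a \<Rightarrow> real"
  assumes B: "finite B" and N: "card B > 0" and mN: "m \<le> card B"
    and lam: "0 < lam" "lam \<le> 1" and I: "finite I" and g: "\<And>i b. i \<in> I \<Longrightarrow> b \<in> B \<Longrightarrow> \<bar>g i b\<bar> \<le> 1"
  shows "real (card {S\<in>msub B m. \<exists>i\<in>I. \<bar>(\<Sum>b\<in>S. g i b) - real m / real (card B) * (\<Sum>b\<in>B. g i b)\<bar> > 4 * lam * real m})
     \<le> real (card I) * cbound lam m * real (card B choose m)"
proof -
  have "{S\<in>msub B m. \<exists>i\<in>I. \<bar>(\<Sum>b\<in>S. g i b) - real m / real (card B) * (\<Sum>b\<in>B. g i b)\<bar> > 4 * lam * real m}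
     = (\<Union>i\<in>I. {S\<in>msub B m. \<bar>(\<Sum>b\<in>S. g i b) - real m / real (card B) * (\<Sum>b\<in>B. g i b)\<bar> > 4 * lam * real m})"
    by blast
  then have "real (card {S\<in>msub B m. \<exists>i\<in>I. \<bar>(\<Sum>b\<in>S. g i b) - real m / real (card B) * (\<Sum>b\<in>B. g i b)\<bar> > 4 * lam * real m})
     \<le> real (\<Sum>i\<in>I. card {S\<in>msub B m. \<bar>(\<Sum>b\<in>S. g i b) - real m / real (card B) * (\<Sum>b\<in>B. g i b)\<bar> > 4 * lam * real m})"
    using card_UN_le[OF I] by (simp only: of_nat_le_iff)
  also have "\<dots> = (\<Sum>i\<in>I. real (card {S\<in>msub B m. \<bar>(\<Sum>b\<in>S. g i b) - real m / real (card B) * (\<Sum>b\<in>B. g i b)\<bar> > 4 * lam * real m}))"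
    by simp
  also have "\<dots> \<le> (\<Sum>i\<in>I. cbound lam m * real (card B choose m))"
    by (intro sum_mono conc[OF B N mN lam]) (use g in auto)
  also have "\<dots> = real (card I) * cbound lam m * real (card B choose m)" by simp
  finally show ?thesis .
qed

lemma coll_sub: "X \<in> collections A s x \<Longrightarrow> X j \<subseteq> A"
  unfolding collections_def by (cases "j \<in> {1..s}") auto

lemma fin_coll:
  assumes A: "finite A" shows "finite (collections A s x)"
proof -
  have "collections A s x \<subseteq> {f. \<forall>i. (i \<in> {1..s} \<longrightarrow> f i \<in> Pow A) \<and> (i \<notin> {1..s} \<longrightarrow> f i = {})}"
    unfolding collections_def by auto
  moreover have "finite {f. \<forall>i. (i \<in> {1..s} \<longrightarrow> f i \<in> Pow A) \<and> (i \<notin> {1..s} \<longrightarrow> f i = {})}"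
    using A by (intro finite_set_of_finite_funs) auto
  ultimately show ?thesis using finite_subset by blast
qed

lemma ne_coll:
  assumes A: "finite A" and sx: "(\<Sum>i=1..s. x i) \<le> card A"
  shows "collections A s x \<noteq> {}"
proof -
  obtain e where e: "bij_betw e {0..<card A} A" using A ex_bij_betw_nat_finite by blast
  define pre where "pre i = (\<Sum>k\<in>{1..<i}. x k)" for i
  define X where "X i = (if i \<in> {1..s} then e ` {pre i..<pre i + x i} else {})" for i
  have preSuc: "pre i + x i = (\<Sum>k\<in>{1..<Suc i}. x k)" if "1 \<le> i" for i
    unfolding pre_def using that by (simp add: sum.atLeastLessThan_Suc)
  have bound: "pre i + x i \<le> card A" if "i \<in> {1..s}" for i
  proof -
    have "pre i + x i = (\<Sum>k\<in>{1..<Suc i}. x k)" using that preSuc by simp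
    also have "\<dots> \<le> (\<Sum>k\<in>{1..s}. x k)" using that by (intro sum_mono2) auto
    finally show ?thesis using sx by simp
  qed
  have order: "pre i + x i \<le> pre j" if "1 \<le> i" "i < j" for i j
  proof -
    have "pre i + x i = (\<Sum>k\<in>{1..<Suc i}. x k)" using that preSuc by simp
    also have "\<dots> \<le> (\<Sum>k\<in>{1..<j}. x k)" using that by (intro sum_mono2) auto
    finally show ?thesis unfolding pre_def .
  qed
  have inj: "inj_on e {0..<card A}" using e bij_betw_imp_inj_on by blast
  have img: "e ` {0..<card A} = A" using e bij_betw_imp_surj_on by blast
  have Xin: "X \<in> collections A s x"
    unfolding collections_def
  proof (intro CollectI conjI ballI impI allI)
    fix i assume i: "i \<in> {1..s}"
    have sub: "{pre i..<pre i + x i} \<subseteq> {0..<card A}" using bound[OF i] by auto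
    show "X i \<subseteq> A" unfolding X_def using i sub img by auto
    show "card (X i) = x i" unfolding X_def using i card_image[OF inj_on_subset[OF inj sub]] by simp
  next
    fix i j assume i: "i \<in> {1..s}" and j: "j \<in> {1..s}" and ij: "i \<noteq> j"
    have si: "{pre i..<pre i + x i} \<subseteq> {0..<card A}" using bound[OF i] by auto
    have sj: "{pre j..<pre j + x j} \<subseteq> {0..<card A}" using bound[OF j] by auto
    have disj: "{pre i..<pre i + x i} \<inter> {pre j..<pre j + x j} = {}"
    proof (cases "i < j")
      case True then show ?thesis using order[of i j] i by auto
    next
      case False then have "j < i" using ij by simp
      then show ?thesis using order[of j i] j by auto
    qed
    have "e ` {pre i..<pre i + x i} \<inter> e ` {pre j..<pre j + x j} = e ` ({pre i..<pre i + x i} \<inter> {pre j..<pre j + x j})"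
      using inj_on_image_Int[OF inj si sj] by simp
    also have "\<dots> = {}" by (simp only: disj image_empty)
    finally show "X i \<inter> X j = {}"
      unfolding X_def using i j by simp
  next
    fix i assume "i \<notin> {1..s}" then show "X i = {}" unfolding X_def by auto
  qed
  then show ?thesis by blast
qed

lemma perm_exists:
  assumes A: "finite A" and S: "S \<in> msub A m" and S': "S' \<in> msub A m"
  shows "\<exists>\<pi>. bij_betw \<pi> A A \<and> \<pi> ` S = S'"
proof -
  have SA: "S \<subseteq> A" "card S = m" and SA': "S' \<subseteq> A" "card S' = m" using S S' unfolding msub_def by auto
  have fS: "finite S" "finite S'" using SA SA' A finite_subset by blast+
  obtain f1 where f1: "bij_betw f1 S S'" using finite_same_card_bij[OF fS] SA SA' by auto
  have "card (A - S) = card (A - S')" using SA SA' fS by (simp add: card_Diff_subset)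
  then obtain f2 where f2: "bij_betw f2 (A - S) (A - S')" using finite_same_card_bij A by blast
  define \<pi> where "\<pi> a = (if a \<in> S then f1 a else f2 a)" for a
  have b1: "bij_betw \<pi> S S'" using f1 by (rule bij_betw_cong[THEN iffD1, rotated]) (simp add: \<pi>_def)
  have b2: "bij_betw \<pi> (A - S) (A - S')" using f2 by (rule bij_betw_cong[THEN iffD1, rotated]) (simp add: \<pi>_def)
  have "bij_betw \<pi> (S \<union> (A - S)) (S' \<union> (A - S'))" by (rule bij_betw_combine[OF b1 b2]) auto
  moreover have "S \<union> (A - S) = A" "S' \<union> (A - S') = A" using SA SA' by auto
  ultimately have "bij_betw \<pi> A A" by simp
  moreover have "\<pi> ` S = S'" using b1 bij_betw_imp_surj_on by blast
  ultimately show ?thesis by blast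
qed

lemma fib_le:
  assumes A: "finite A" and S: "S \<in> msub A (x i)" and S': "S' \<in> msub A (x i)"
  shows "card {X\<in>collections A s x. X i = S} \<le> card {X\<in>collections A s x. X i = S'}"
proof -
  let ?C = "collections A s x"
  obtain \<pi> where \<pi>: "bij_betw \<pi> A A" and im: "\<pi> ` S = S'" using perm_exists[OF A S S'] by blast
  have inj: "inj_on \<pi> A" using \<pi> bij_betw_imp_inj_on by blast
  have surj: "\<pi> ` A = A" using \<pi> bij_betw_imp_surj_on by blast
  define \<Phi> where "\<Phi> X = (\<lambda>j. \<pi> ` X j)" for X :: "nat \<Rightarrow> _"
  show ?thesis
  proof (rule card_inj_on_le[where f = \<Phi>])
    show "inj_on \<Phi> {X \<in> ?C. X i = S}"
    proof (rule inj_onI)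
      fix X Y assume X: "X \<in> {X \<in> ?C. X i = S}" and Y: "Y \<in> {X \<in> ?C. X i = S}" and eq: "\<Phi> X = \<Phi> Y"
      show "X = Y"
      proof
        fix j
        have "\<pi> ` X j = \<pi> ` Y j" using fun_cong[OF eq, of j] unfolding \<Phi>_def by simp
        then show "X j = Y j" using inj_on_image_eq_iff[OF inj coll_sub coll_sub] X Y by auto
      qed
    qed
    show "\<Phi> ` {X \<in> ?C. X i = S} \<subseteq> {X \<in> ?C. X i = S'}"
    proof
      fix Z assume "Z \<in> \<Phi> ` {X \<in> ?C. X i = S}"
      then obtain X where X: "X \<in> ?C" "X i = S" and Z: "Z = \<Phi> X" by auto
      have Xs: "X j \<subseteq> A" for j using coll_sub[OF X(1)] .
      have "Z \<in> ?C" unfolding collections_def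
      proof (intro CollectI conjI ballI impI allI)
        fix j assume j: "j \<in> {1..s}"
        show "Z j \<subseteq> A" unfolding Z \<Phi>_def using Xs[of j] surj by auto
        show "card (Z j) = x j" unfolding Z \<Phi>_def
          using card_image[OF inj_on_subset[OF inj Xs[of j]]] X j unfolding collections_def by auto
      next
        fix j k assume j: "j \<in> {1..s}" and k: "k \<in> {1..s}" and jk: "j \<noteq> k"
        have "X j \<inter> X k = {}" using X j k jk unfolding collections_def by auto
        then show "Z j \<inter> Z k = {}" unfolding Z \<Phi>_def
          using inj_on_image_Int[OF inj Xs[of j] Xs[of k]] by simp
      next
        fix j assume "j \<notin> {1..s}"
        then show "Z j = {}" unfolding Z \<Phi>_def using X unfolding collections_def by auto
      qed
      moreover have "Z i = S'" unfolding Z \<Phi>_def using X im by simp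
      ultimately show "Z \<in> {X \<in> ?C. X i = S'}" by simp
    qed
    show "finite {X \<in> ?C. X i = S'}" using fin_coll[OF A] by simp
  qed
qed

lemma marg:
  assumes A: "finite A" and i: "i \<in> {1..s}"
  shows "real (card {X\<in>collections A s x. P (X i)}) * real (card A choose x i)
       = real (card {S\<in>msub A (x i). P S}) * real (card (collections A s x))"
proof -
  let ?C = "collections A s x"
  let ?M = "msub A (x i)"
  define fib where "fib S = {X\<in>?C. X i = S}" for S
  have finC: "finite ?C" by (rule fin_coll[OF A])
  have finM: "finite ?M" using A by (rule finite_msub)
  have Xi: "X i \<in> ?M" if "X \<in> ?C" for X using that i unfolding collections_def msub_def by auto
  have cardsum: "card {X\<in>?C. Q (X i)} = (\<Sum>S\<in>{S\<in>?M. Q S}. card (fib S))" for Q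
  proof -
    have "{X\<in>?C. Q (X i)} = (\<Union>S\<in>{S\<in>?M. Q S}. fib S)" unfolding fib_def using Xi by auto
    moreover have "card (\<Union>S\<in>{S\<in>?M. Q S}. fib S) = (\<Sum>S\<in>{S\<in>?M. Q S}. card (fib S))"
      by (rule card_UN_disjoint) (use finM finC in \<open>auto simp: fib_def\<close>)
    ultimately show ?thesis by simp
  qed
  show ?thesis
  proof (cases "?M = {}")
    case True
    then have "?C = {}" using Xi by blast
    then show ?thesis using True by simp
  next
    case False
    then obtain S0 where S0: "S0 \<in> ?M" by blast
    have const: "card (fib S) = card (fib S0)" if "S \<in> ?M" for S
      unfolding fib_def using fib_le[where x=x and i=i and s=s, OF A that S0] fib_le[where x=x and i=i and s=s, OF A S0 that] by simp
    have c1: "card {X\<in>?C. P (X i)} = card {S\<in>?M. P S} * card (fib S0)"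
      using cardsum[of P] const by simp
    have c2: "card ?C = card ?M * card (fib S0)"
      using cardsum[of "\<lambda>_. True"] const by simp
    show ?thesis unfolding c2 using c1 card_msub[OF A] by simp
  qed
qed

definition ind :: "('a \<Rightarrow> 'a \<Rightarrow> bool) \<Rightarrow> 'a \<Rightarrow> 'a \<Rightarrow> real" where
  "ind E a b = (if E a b then 1 else 0)"
definition fv :: "('a \<Rightarrow> 'a \<Rightarrow> bool) \<Rightarrow> real \<Rightarrow> 'a \<Rightarrow> 'a \<Rightarrow> real" where
  "fv E r a b = ind E a b - r"
definition FF :: "('a \<Rightarrow> 'a \<Rightarrow> bool) \<Rightarrow> real \<Rightarrow> 'a set \<Rightarrow> 'a \<Rightarrow> 'a \<Rightarrow> real" where
  "FF E r Y a a' = (\<Sum>b\<in>Y. fv E r a b * fv E r a' b)"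
definition QQ :: "('a \<Rightarrow> 'a \<Rightarrow> bool) \<Rightarrow> real \<Rightarrow> 'a set \<Rightarrow> 'a set \<Rightarrow> real" where
  "QQ E r X Y = (\<Sum>a\<in>X. \<Sum>a'\<in>X. \<bar>FF E r Y a a'\<bar>)"

lemma cs_sum:
  fixes f :: "'b \<Rightarrow> real"
  assumes "finite I"
  shows "(\<Sum>i\<in>I. f i)^2 \<le> real (card I) * (\<Sum>i\<in>I. (f i)^2)"
proof (cases "card I = 0")
  case True
  then have "I = {}" using assms by simp
  then show ?thesis by simp
next
  case False
  define n where "n = real (card I)"
  have n: "0 < n" using False n_def by simp
  define m where "m = (\<Sum>i\<in>I. f i) / n"
  have "0 \<le> (\<Sum>i\<in>I. (f i - m)^2)" by (intro sum_nonneg) auto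
  also have "(\<Sum>i\<in>I. (f i - m)^2) = (\<Sum>i\<in>I. (f i)^2 + m^2 - 2 * m * f i)"
    by (rule sum.cong[OF refl]) (simp add: power2_diff mult.commute mult.left_commute)
  also have "\<dots> = (\<Sum>i\<in>I. (f i)^2) + n * m^2 - 2 * m * (\<Sum>i\<in>I. f i)"
    by (simp only: sum_subtractf sum.distrib sum_distrib_left[symmetric] sum_constant n_def)
  also have "\<dots> = (\<Sum>i\<in>I. (f i)^2) - (\<Sum>i\<in>I. f i)^2 / n"
    unfolding m_def using n by (simp add: power2_eq_square field_simps)
  finally have "(\<Sum>i\<in>I. f i)^2 / n \<le> (\<Sum>i\<in>I. (f i)^2)" by simp
  then show ?thesis using n unfolding n_def by (simp add: field_simps)
qed

lemma card_nbr: "finite Y \<Longrightarrow> real (card {b\<in>Y. E a b}) = (\<Sum>b\<in>Y. ind E a b)"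
  unfolding ind_def by (simp add: sum.inter_filter[symmetric])

lemma card_nbr2: "finite Y \<Longrightarrow> real (card {a\<in>Y. E a b}) = (\<Sum>a\<in>Y. ind E a b)"
  unfolding ind_def by (simp add: sum.inter_filter[symmetric])

lemma edges_sum:
  assumes "finite X" "finite Y"
  shows "real (card (edges_between E X Y)) = (\<Sum>a\<in>X. \<Sum>b\<in>Y. ind E a b)"
proof -
  have "edges_between E X Y = Sigma X (\<lambda>a. {b\<in>Y. E a b})" unfolding edges_between_def by auto
  then have "card (edges_between E X Y) = (\<Sum>a\<in>X. card {b\<in>Y. E a b})"
    using assms by (simp add: card_SigmaI)
  then have "real (card (edges_between E X Y)) = (\<Sum>a\<in>X. real (card {b\<in>Y. E a b}))" by simp
  also have "\<dots> = (\<Sum>a\<in>X. \<Sum>b\<in>Y. ind E a b)" using card_nbr[OF assms(2)] by simp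
  finally show ?thesis .
qed

lemma lemD:
  assumes X: "finite X" and Y: "finite Y" and X': "X' \<subseteq> X" and Y': "Y' \<subseteq> Y"
  shows "(real (card (edges_between E X' Y')) - r * real (card X') * real (card Y'))^2
     \<le> real (card Y') * QQ E r X Y"
proof -
  have fX': "finite X'" using X X' finite_subset by blast
  have fY': "finite Y'" using Y Y' finite_subset by blast
  define S where "S b = (\<Sum>a\<in>X'. fv E r a b)" for b
  have "real (card (edges_between E X' Y')) - r * real (card X') * real (card Y')
       = (\<Sum>a\<in>X'. \<Sum>b\<in>Y'. fv E r a b)"
    unfolding edges_sum[OF fX' fY'] fv_def by (simp add: sum_subtractf)
  also have "\<dots> = (\<Sum>b\<in>Y'. S b)" unfolding S_def by (rule sum.swap)
  finally have eq: "real (card (edges_between E X' Y')) - r * real (card X') * real (card Y') = (\<Sum>b\<in>Y'. S b)" .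
  have "(\<Sum>b\<in>Y'. S b)^2 \<le> real (card Y') * (\<Sum>b\<in>Y'. (S b)^2)" by (rule cs_sum[OF fY'])
  also have "(\<Sum>b\<in>Y'. (S b)^2) \<le> (\<Sum>b\<in>Y. (S b)^2)" by (rule sum_mono2[OF Y Y']) auto
  also have "(\<Sum>b\<in>Y. (S b)^2) = (\<Sum>a\<in>X'. \<Sum>a'\<in>X'. FF E r Y a a')"
  proof -
    have "(\<Sum>b\<in>Y. (S b)^2) = (\<Sum>b\<in>Y. \<Sum>a\<in>X'. \<Sum>a'\<in>X'. fv E r a b * fv E r a' b)"
      unfolding S_def by (simp add: power2_eq_square sum_distrib_left sum_distrib_right)
         (rule sum.cong[OF refl], rule sum.swap)
    also have "\<dots> = (\<Sum>a\<in>X'. \<Sum>b\<in>Y. \<Sum>a'\<in>X'. fv E r a b * fv E r a' b)" by (rule sum.swap)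
    also have "\<dots> = (\<Sum>a\<in>X'. \<Sum>a'\<in>X'. \<Sum>b\<in>Y. fv E r a b * fv E r a' b)"
      by (rule sum.cong[OF refl]) (rule sum.swap)
    finally show ?thesis unfolding FF_def .
  qed
  also have "\<dots> \<le> (\<Sum>a\<in>X'. \<Sum>a'\<in>X'. \<bar>FF E r Y a a'\<bar>)" by (intro sum_mono) auto
  also have "\<dots> \<le> (\<Sum>a\<in>X. \<Sum>a'\<in>X'. \<bar>FF E r Y a a'\<bar>)" by (rule sum_mono2[OF X X']) (auto intro: sum_nonneg)
  also have "\<dots> \<le> QQ E r X Y" unfolding QQ_def by (intro sum_mono sum_mono2[OF X X']) auto
  finally show ?thesis using eq by (simp add: mult_left_mono)
qed


lemma reg_from_Q:
  assumes X: "finite X" and Y: "finite Y" and ep: "0 < ep" and X0: "card X > 0" and Y0: "card Y > 0"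
    and Q: "QQ E r X Y \<le> eta * real (card X)^2 * real (card Y)" and eta: "eta \<le> ep^5"
  shows "regular_pair E X Y r ep"
  unfolding regular_pair_def
proof (intro allI impI)
  fix X' Y' assume X': "X' \<subseteq> X" and Y': "Y' \<subseteq> Y"
    and cX: "ep * real (card X) \<le> real (card X')" and cY: "ep * real (card Y) \<le> real (card Y')"
  define x where "x = real (card X)"
  define y where "y = real (card Y)"
  define x' where "x' = real (card X')"
  define y' where "y' = real (card Y')"
  define e where "e = real (card (edges_between E X' Y'))"
  have x0: "0 \<le> x" "0 \<le> y" unfolding x_def y_def by auto
  have D: "(e - r * x' * y')^2 \<le> y' * QQ E r X Y"
    unfolding e_def x'_def y'_def by (rule lemD[OF X Y X' Y'])
  have ex: "ep * x \<le> x'" and ey: "ep * y \<le> y'" using cX cY unfolding x_def y_def x'_def y'_def by auto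
  show "r - ep \<le> dens E X' Y' \<and> dens E X' Y' \<le> r + ep"
  proof -
    have "0 < ep * x" "0 < ep * y" using ep X0 Y0 unfolding x_def y_def by auto
    then have xp: "0 < x'" "0 < y'" using ex ey by linarith+

    have "y' * QQ E r X Y \<le> y' * (eta * x^2 * y)"
      using Q xp unfolding x_def y_def by (intro mult_left_mono) auto
    also have "\<dots> \<le> y' * (ep^5 * x^2 * y)"
      using eta x0 xp by (intro mult_left_mono mult_right_mono) auto
    also have "\<dots> = y' * ((ep * x)^2 * (ep * y) * ep^2)" by (simp add: power2_eq_square eval_nat_numeral)
    also have "\<dots> \<le> y' * (x'^2 * y' * ep^2)"
    proof -
      have p1: "(ep * x)^2 \<le> x'^2" using ex ep x0 by (intro power_mono) auto
      have p2: "(ep * x)^2 * (ep * y) \<le> x'^2 * y'" using p1 ey ep x0 by (intro mult_mono) auto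
      have p3: "(ep * x)^2 * (ep * y) * ep^2 \<le> x'^2 * y' * ep^2" using p2 by (rule mult_right_mono) simp
      show ?thesis by (rule mult_left_mono[OF p3]) (use xp in simp)
    qed
    also have "\<dots> = (ep * x' * y')^2" by (simp add: power2_eq_square)
    finally have "(e - r * x' * y')^2 \<le> (ep * x' * y')^2" using D by linarith
    then have "\<bar>e - r * x' * y'\<bar>^2 \<le> (ep * x' * y')^2" by (simp only: power2_abs)
    moreover have "0 \<le> ep * x' * y'" using ep xp by simp
    ultimately have ab: "\<bar>e - r * x' * y'\<bar> \<le> ep * x' * y'"
      by (rule power2_le_imp_le)
    have dens: "dens E X' Y' = e / (x' * y')" unfolding dens_def e_def x'_def y'_def by simp
    have "e / (x' * y') - r = (e - r * x' * y') / (x' * y')" using xp by (simp add: field_simps)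
    then have "\<bar>e / (x' * y') - r\<bar> = \<bar>e - r * x' * y'\<bar> / (x' * y')"
      using xp by (simp add: abs_divide)
    also have "\<dots> \<le> ep * x' * y' / (x' * y')" using ab xp by (intro divide_right_mono) auto
    also have "\<dots> = ep" using xp by simp
    finally show ?thesis unfolding dens by linarith
  qed
qed


lemma sum_if_const:
  assumes "finite A" "S \<subseteq> A"
  shows "(\<Sum>a\<in>A. if a \<in> S then (c::real) else 0) = real (card S) * c"
proof -
  have "(\<Sum>a\<in>A. if a \<in> S then c else 0) = (\<Sum>a\<in>{a\<in>A. a \<in> S}. c)"
    using assms(1) by (subst sum.inter_filter) auto
  also have "{a\<in>A. a \<in> S} = S" using assms(2) by auto
  finally show ?thesis by simp
qed

lemma degdev:
  assumes A: "finite A" and B: "finite B" and A0: "card A > 0" and B0: "card B > 0"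
    and ep: "0 < ep" and r: "0 \<le> r" "r \<le> 1" and reg: "regular_pair E A B r ep" and U: "U \<subseteq> B"
  shows "(\<Sum>a\<in>A. \<bar>\<Sum>b\<in>U. fv E r a b\<bar>) \<le> 3 * ep * real (card A) * real (card B)"
proof -
  define u where "u = real (card U)"
  define D where "D a = (\<Sum>b\<in>U. fv E r a b)" for a
  have fU: "finite U" using U B finite_subset by blast
  have uB: "u \<le> real (card B)" unfolding u_def using card_mono[OF B U] by simp
  have u0: "0 \<le> u" unfolding u_def by simp
  have deg: "(\<Sum>b\<in>U. ind E a b) = D a + r * u" for a
    unfolding D_def fv_def u_def by (simp add: sum_subtractf)
  have deg0: "0 \<le> (\<Sum>b\<in>U. ind E a b)" "(\<Sum>b\<in>U. ind E a b) \<le> u" for a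
  proof -
    show "0 \<le> (\<Sum>b\<in>U. ind E a b)" by (intro sum_nonneg) (simp add: ind_def)
    have "(\<Sum>b\<in>U. ind E a b) \<le> (\<Sum>b\<in>U. 1)" by (intro sum_mono) (simp add: ind_def)
    then show "(\<Sum>b\<in>U. ind E a b) \<le> u" unfolding u_def by simp
  qed
  have Dabs: "\<bar>D a\<bar> \<le> u" for a
  proof -
    have "r * u \<le> u" using r u0 by (simp add: mult_left_le_one_le)
    moreover have "0 \<le> r * u" using r u0 by simp
    ultimately show ?thesis using deg[of a] deg0[of a] by linarith
  qed
  have nA: "0 < real (card A)" "0 < real (card B)" using A0 B0 by auto
  show ?thesis
  proof (cases "u < ep * real (card B)")
    case True
    have "(\<Sum>a\<in>A. \<bar>\<Sum>b\<in>U. fv E r a b\<bar>) \<le> (\<Sum>a\<in>A. ep * real (card B))"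
      using Dabs True unfolding D_def by (intro sum_mono) (smt (verit))
    also have "\<dots> = ep * real (card A) * real (card B)" by simp
    also have "\<dots> \<le> 3 * ep * real (card A) * real (card B)" using ep nA by simp
    finally show ?thesis .
  next
    case False
    then have uge: "ep * real (card B) \<le> u" by simp
    have upos: "0 < u" using uge ep nA by (smt (verit) mult_pos_pos)
    define P where "P = {a\<in>A. D a > ep * u}"
    define M where "M = {a\<in>A. D a < - (ep * u)}"
    have PA: "P \<subseteq> A" and MA: "M \<subseteq> A" unfolding P_def M_def by auto
    have fP: "finite P" and fM: "finite M" using PA MA A finite_subset by blast+
    have cU: "ep * real (card B) \<le> real (card U)" using uge unfolding u_def .
    have edgesP: "real (card (edges_between E P U)) = (\<Sum>a\<in>P. D a + r * u)"
      using edges_sum[OF fP fU] deg by simp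
    have Pbound: "real (card P) < ep * real (card A)"
    proof (rule ccontr)
      assume "\<not> real (card P) < ep * real (card A)"
      then have cP: "ep * real (card A) \<le> real (card P)" by simp
      then have Pne: "P \<noteq> {}" using ep nA by (smt (verit) card.empty mult_pos_pos of_nat_0)
      have pp: "0 < real (card P)" using Pne fP by (simp add: card_gt_0_iff)
      have "dens E P U \<le> r + ep" using reg PA U cP cU unfolding regular_pair_def by blast
      moreover have "(\<Sum>a\<in>P. ep * u + r * u) < (\<Sum>a\<in>P. D a + r * u)"
        using Pne fP by (intro sum_strict_mono) (auto simp: P_def)
      then have "real (card P) * ((r + ep) * u) < real (card (edges_between E P U))"
        using edgesP by (simp add: algebra_simps)
      then have "r + ep < dens E P U"
        unfolding dens_def u_def[symmetric] using pp upos by (simp add: field_simps)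
      ultimately show False by simp
    qed
    have edgesM: "real (card (edges_between E M U)) = (\<Sum>a\<in>M. D a + r * u)"
      using edges_sum[OF fM fU] deg by simp
    have Mbound: "real (card M) < ep * real (card A)"
    proof (rule ccontr)
      assume "\<not> real (card M) < ep * real (card A)"
      then have cM: "ep * real (card A) \<le> real (card M)" by simp
      then have Mne: "M \<noteq> {}" using ep nA by (smt (verit) card.empty mult_pos_pos of_nat_0)
      have pp: "0 < real (card M)" using Mne fM by (simp add: card_gt_0_iff)
      have "r - ep \<le> dens E M U" using reg MA U cM cU unfolding regular_pair_def by blast
      moreover have "(\<Sum>a\<in>M. D a + r * u) < (\<Sum>a\<in>M. - (ep * u) + r * u)"
        using Mne fM by (intro sum_strict_mono) (auto simp: M_def)
      then have "real (card (edges_between E M U)) < real (card M) * ((r - ep) * u)"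
        using edgesM by (simp add: algebra_simps)
      then have "dens E M U < r - ep"
        unfolding dens_def u_def[symmetric] using pp upos by (simp add: field_simps)
      ultimately show False by simp
    qed
    have pw: "\<bar>D a\<bar> \<le> ep * u + (if a \<in> P \<union> M then u else 0)" if "a \<in> A" for a
    proof (cases "a \<in> P \<union> M")
      case True
      have "0 \<le> ep * u" using ep u0 by simp
      then show ?thesis using Dabs[of a] True by simp
    next
      case False then have "\<not> D a > ep * u" "\<not> D a < - (ep * u)" using that unfolding P_def M_def by auto
      then show ?thesis using False by simp
    qed
    have "(\<Sum>a\<in>A. \<bar>\<Sum>b\<in>U. fv E r a b\<bar>) = (\<Sum>a\<in>A. \<bar>D a\<bar>)" unfolding D_def by simp
    also have "\<dots> \<le> (\<Sum>a\<in>A. ep * u + (if a \<in> P \<union> M then u else 0))" using pw by (rule sum_mono)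
    also have "\<dots> = real (card A) * (ep * u) + real (card (P \<union> M)) * u"
      using sum_if_const[OF A, of "P \<union> M" u] PA MA by (simp add: sum.distrib)
    also have "\<dots> \<le> real (card A) * (ep * real (card B)) + (real (card P) + real (card M)) * real (card B)"
    proof (intro add_mono mult_mono)
      show "real (card (P \<union> M)) \<le> real (card P) + real (card M)" using card_Un_le[of P M] by linarith
    qed (use uB ep u0 nA in auto)
    also have "\<dots> \<le> real (card A) * (ep * real (card B)) + (2 * ep * real (card A)) * real (card B)"
      using Pbound Mbound nA by (intro add_left_mono mult_right_mono) auto
    also have "\<dots> = 3 * ep * real (card A) * real (card B)" by (simp add: algebra_simps)
    finally show ?thesis .
  qed
qed

lemma lemR:
  assumes A: "finite A" and B: "finite B" and A0: "card A > 0" and B0: "card B > 0"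
    and ep: "0 < ep" and r: "0 \<le> r" "r \<le> 1" and reg: "regular_pair E A B r ep"
  shows "(\<Sum>a\<in>A. \<Sum>a'\<in>A. \<bar>FF E r B a a'\<bar>) \<le> 3 * ep * real (card A)^2 * real (card B)"
proof -
  have row: "(\<Sum>a'\<in>A. \<bar>FF E r B a a'\<bar>) \<le> 3 * ep * real (card A) * real (card B)" for a
  proof -
    define N where "N = {b\<in>B. E a b}"
    have NB: "N \<subseteq> B" unfolding N_def by auto
    have fN: "finite N" "finite (B - N)" using NB B finite_subset by auto
    have split: "FF E r B a a' = (1 - r) * (\<Sum>b\<in>N. fv E r a' b) + (- r) * (\<Sum>b\<in>B - N. fv E r a' b)" for a'
    proof -
      have "FF E r B a a' = (\<Sum>b\<in>N. fv E r a b * fv E r a' b) + (\<Sum>b\<in>B - N. fv E r a b * fv E r a' b)"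
        unfolding FF_def using sum.subset_diff[OF NB B, of "\<lambda>b. fv E r a b * fv E r a' b"] by (simp add: add.commute)
      also have "(\<Sum>b\<in>N. fv E r a b * fv E r a' b) = (\<Sum>b\<in>N. (1 - r) * fv E r a' b)"
        by (rule sum.cong) (auto simp: N_def fv_def ind_def)
      also have "(\<Sum>b\<in>B - N. fv E r a b * fv E r a' b) = (\<Sum>b\<in>B - N. (- r) * fv E r a' b)"
        by (rule sum.cong) (auto simp: N_def fv_def ind_def)
      finally show ?thesis by (simp add: sum_distrib_left)
    qed
    have "(\<Sum>a'\<in>A. \<bar>FF E r B a a'\<bar>)
        \<le> (\<Sum>a'\<in>A. (1 - r) * \<bar>\<Sum>b\<in>N. fv E r a' b\<bar> + r * \<bar>\<Sum>b\<in>B - N. fv E r a' b\<bar>)"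
    proof (rule sum_mono)
      fix a' assume "a' \<in> A"
      have "\<bar>FF E r B a a'\<bar> \<le> \<bar>(1 - r) * (\<Sum>b\<in>N. fv E r a' b)\<bar> + \<bar>(- r) * (\<Sum>b\<in>B - N. fv E r a' b)\<bar>"
        unfolding split by (rule abs_triangle_ineq)
      also have "\<dots> = (1 - r) * \<bar>\<Sum>b\<in>N. fv E r a' b\<bar> + r * \<bar>\<Sum>b\<in>B - N. fv E r a' b\<bar>"
        using r by (simp add: abs_mult)
      finally show "\<bar>FF E r B a a'\<bar> \<le> (1 - r) * \<bar>\<Sum>b\<in>N. fv E r a' b\<bar> + r * \<bar>\<Sum>b\<in>B - N. fv E r a' b\<bar>" .
    qed
    also have "\<dots> = (1 - r) * (\<Sum>a'\<in>A. \<bar>\<Sum>b\<in>N. fv E r a' b\<bar>) + r * (\<Sum>a'\<in>A. \<bar>\<Sum>b\<in>B - N. fv E r a' b\<bar>)"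
      by (simp add: sum.distrib sum_distrib_left)
    also have "\<dots> \<le> (1 - r) * (3 * ep * real (card A) * real (card B)) + r * (3 * ep * real (card A) * real (card B))"
      using r by (intro add_mono mult_left_mono degdev[OF A B A0 B0 ep r reg]) (use NB in auto)
    also have "\<dots> = 3 * ep * real (card A) * real (card B)" by (simp add: algebra_simps)
    finally show ?thesis .
  qed
  have "(\<Sum>a\<in>A. \<Sum>a'\<in>A. \<bar>FF E r B a a'\<bar>) \<le> (\<Sum>a\<in>A. 3 * ep * real (card A) * real (card B))"
    using row by (rule sum_mono)
  also have "\<dots> = 3 * ep * real (card A)^2 * real (card B)" by (simp add: power2_eq_square)
  finally show ?thesis .
qed

definition h0 :: "('a \<Rightarrow> 'a \<Rightarrow> bool) \<Rightarrow> real \<Rightarrow> 'a set \<Rightarrow> 'a \<Rightarrow> 'a \<Rightarrow> real" where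
  "h0 E r B a a' = \<bar>FF E r B a a'\<bar> / real (card B)"
definition H0 :: "('a \<Rightarrow> 'a \<Rightarrow> bool) \<Rightarrow> real \<Rightarrow> 'a set \<Rightarrow> 'a set \<Rightarrow> 'a \<Rightarrow> real" where
  "H0 E r A B a = (\<Sum>a'\<in>A. h0 E r B a a')"

definition GY :: "('a \<Rightarrow> 'a \<Rightarrow> bool) \<Rightarrow> real \<Rightarrow> 'a set \<Rightarrow> 'a set \<Rightarrow> real \<Rightarrow> 'a set \<Rightarrow> bool" where
  "GY E r A B lam T \<longleftrightarrow>
    (\<forall>a\<in>A. \<forall>a'\<in>A. \<bar>(\<Sum>b\<in>T. fv E r a b * fv E r a' b) - real (card T) / real (card B) * (\<Sum>b\<in>B. fv E r a b * fv E r a' b)\<bar> \<le> 4 * lam * real (card T)) \<and>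
    (\<forall>a\<in>A. \<bar>(\<Sum>b\<in>T. ind E a b) - real (card T) / real (card B) * (\<Sum>b\<in>B. ind E a b)\<bar> \<le> 4 * lam * real (card T))"

definition GX :: "('a \<Rightarrow> 'a \<Rightarrow> bool) \<Rightarrow> real \<Rightarrow> 'a set \<Rightarrow> 'a set \<Rightarrow> real \<Rightarrow> 'a set \<Rightarrow> bool" where
  "GX E r A B lam S \<longleftrightarrow>
    (\<forall>a\<in>A. \<bar>(\<Sum>a'\<in>S. h0 E r B a a') - real (card S) / real (card A) * (\<Sum>a'\<in>A. h0 E r B a a')\<bar> \<le> 4 * lam * real (card S)) \<and>
    \<bar>(\<Sum>a\<in>S. H0 E r A B a / real (card A)) - real (card S) / real (card A) * (\<Sum>a\<in>A. H0 E r A B a / real (card A))\<bar> \<le> 4 * lam * real (card S) \<and>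
    (\<forall>b\<in>B. \<bar>(\<Sum>a\<in>S. ind E a b) - real (card S) / real (card A) * (\<Sum>a\<in>A. ind E a b)\<bar> \<le> 4 * lam * real (card S))"

lemma lin3: fixes x y z c :: real shows "\<bar>x - y\<bar> \<le> c \<Longrightarrow> \<bar>y\<bar> = z \<Longrightarrow> \<bar>x\<bar> \<le> z + c" by linarith

lemma fv_abs: "0 \<le> r \<Longrightarrow> r \<le> 1 \<Longrightarrow> \<bar>fv E r a b\<bar> \<le> 1"
  unfolding fv_def ind_def by auto

lemma fv_prod_abs: "0 \<le> r \<Longrightarrow> r \<le> 1 \<Longrightarrow> \<bar>fv E r a b * fv E r a' b\<bar> \<le> 1"
  using fv_abs[of r E a b] fv_abs[of r E a' b] by (simp add: abs_mult mult_le_one)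

lemma FF_abs:
  assumes "finite B" "0 \<le> r" "r \<le> 1"
  shows "\<bar>FF E r B a a'\<bar> \<le> real (card B)"
proof -
  have "\<bar>FF E r B a a'\<bar> \<le> (\<Sum>b\<in>B. \<bar>fv E r a b * fv E r a' b\<bar>)" unfolding FF_def by (rule sum_abs)
  also have "\<dots> \<le> (\<Sum>b\<in>B. 1)" by (intro sum_mono fv_prod_abs[OF assms(2,3)])
  finally show ?thesis by simp
qed

lemma h0_range:
  assumes "finite B" "0 \<le> r" "r \<le> 1" "card B > 0"
  shows "0 \<le> h0 E r B a a'" "h0 E r B a a' \<le> 1"
  unfolding h0_def using FF_abs[OF assms(1-3), of E a a'] assms(4) by auto

lemma H0_range:
  assumes "finite A" "finite B" "0 \<le> r" "r \<le> 1" "card B > 0" "card A > 0"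
  shows "0 \<le> H0 E r A B a / real (card A)" "H0 E r A B a / real (card A) \<le> 1"
proof -
  have "0 \<le> H0 E r A B a" unfolding H0_def using h0_range(1)[OF assms(2-5)] by (intro sum_nonneg) auto
  then show "0 \<le> H0 E r A B a / real (card A)" by simp
  have "H0 E r A B a \<le> (\<Sum>a'\<in>A. 1)" unfolding H0_def using h0_range(2)[OF assms(2-5)] by (intro sum_mono) auto
  then show "H0 E r A B a / real (card A) \<le> 1" using assms(6) by simp
qed

lemma Qsample:
  assumes A: "finite A" and B: "finite B" and A0: "card A > 0" and B0: "card B > 0"
    and ep: "0 < ep" and r: "0 \<le> r" "r \<le> 1" and reg: "regular_pair E A B r ep"
    and S: "S \<subseteq> A" and T: "T \<subseteq> B" and lam: "0 \<le> lam"
    and gx: "GX E r A B lam S" and gy: "GY E r A B lam T"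
  shows "QQ E r S T \<le> (3 * ep + 12 * lam) * real (card S)^2 * real (card T)"
proof -
  define nA where "nA = real (card A)"
  define nB where "nB = real (card B)"
  define mX where "mX = real (card S)"
  define mY where "mY = real (card T)"
  have nAp: "0 < nA" and nBp: "0 < nB" using A0 B0 unfolding nA_def nB_def by auto
  have mX0: "0 \<le> mX" and mY0: "0 \<le> mY" unfolding mX_def mY_def by auto
  have fS: "finite S" and fT: "finite T" using S T A B finite_subset by blast+
  have h0r: "0 \<le> h0 E r B a a'" "h0 E r B a a' \<le> 1" for a a' using h0_range[OF B r B0] by auto
  have y1: "\<bar>FF E r T a a'\<bar> \<le> mY * h0 E r B a a' + 4 * lam * mY" if "a \<in> A" "a' \<in> A" for a a'
  proof -
    have g: "\<bar>FF E r T a a' - mY / nB * FF E r B a a'\<bar> \<le> 4 * lam * mY"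
      using gy that unfolding GY_def FF_def mY_def nB_def by blast
    have e: "\<bar>mY / nB * FF E r B a a'\<bar> = mY * h0 E r B a a'"
      unfolding h0_def nB_def[symmetric] using nBp mY0 by (simp add: abs_mult)
    show ?thesis using lin3[OF g e] by (simp add: add.commute)
  qed
  have "QQ E r S T \<le> (\<Sum>a\<in>S. \<Sum>a'\<in>S. mY * h0 E r B a a' + 4 * lam * mY)"
    unfolding QQ_def using y1 S by (intro sum_mono) auto
  also have "\<dots> = mY * (\<Sum>a\<in>S. \<Sum>a'\<in>S. h0 E r B a a') + 4 * lam * mY * mX^2"
    unfolding mX_def by (simp add: sum.distrib sum_distrib_left power2_eq_square algebra_simps)
  finally have q1: "QQ E r S T \<le> mY * (\<Sum>a\<in>S. \<Sum>a'\<in>S. h0 E r B a a') + 4 * lam * mY * mX^2" .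
  have x1: "(\<Sum>a'\<in>S. h0 E r B a a') \<le> mX / nA * H0 E r A B a + 4 * lam * mX" if "a \<in> A" for a
    using gx that unfolding GX_def H0_def mX_def nA_def by (auto simp: abs_le_iff)
  have "(\<Sum>a\<in>S. \<Sum>a'\<in>S. h0 E r B a a') \<le> (\<Sum>a\<in>S. mX / nA * H0 E r A B a + 4 * lam * mX)"
    using x1 S by (intro sum_mono) auto
  also have "\<dots> = mX / nA * (\<Sum>a\<in>S. H0 E r A B a) + 4 * lam * mX^2"
    unfolding mX_def by (simp add: sum.distrib sum_distrib_left power2_eq_square algebra_simps)
  finally have q2: "(\<Sum>a\<in>S. \<Sum>a'\<in>S. h0 E r B a a') \<le> mX / nA * (\<Sum>a\<in>S. H0 E r A B a) + 4 * lam * mX^2" .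
  have x2: "(\<Sum>a\<in>S. H0 E r A B a / nA) \<le> mX / nA * (\<Sum>a\<in>A. H0 E r A B a / nA) + 4 * lam * mX"
    using gx unfolding GX_def mX_def nA_def by (auto simp: abs_le_iff)
  have HA: "(\<Sum>a\<in>A. H0 E r A B a) \<le> 3 * ep * nA^2"
  proof -
    have "(\<Sum>a\<in>A. H0 E r A B a) = (\<Sum>a\<in>A. \<Sum>a'\<in>A. \<bar>FF E r B a a'\<bar>) / nB"
      unfolding H0_def h0_def nB_def by (simp add: sum_divide_distrib)
    also have "\<dots> \<le> 3 * ep * nA^2 * nB / nB"
      using lemR[OF A B A0 B0 ep r reg] nBp unfolding nA_def nB_def by (intro divide_right_mono) auto
    also have "\<dots> = 3 * ep * nA^2" using nBp by simp
    finally show ?thesis .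
  qed
  have x3: "(\<Sum>a\<in>S. H0 E r A B a) \<le> mX / nA * (\<Sum>a\<in>A. H0 E r A B a) + 4 * lam * mX * nA"
  proof -
    have "(\<Sum>a\<in>S. H0 E r A B a) = nA * (\<Sum>a\<in>S. H0 E r A B a / nA)"
      using nAp by (simp add: sum_divide_distrib[symmetric])
    also have "\<dots> \<le> nA * (mX / nA * (\<Sum>a\<in>A. H0 E r A B a / nA) + 4 * lam * mX)"
      using x2 nAp by (intro mult_left_mono) auto
    also have "\<dots> = mX / nA * (\<Sum>a\<in>A. H0 E r A B a) + 4 * lam * mX * nA"
      using nAp by (simp add: sum_divide_distrib[symmetric] field_simps)
    finally show ?thesis .
  qed
  have "(\<Sum>a\<in>S. \<Sum>a'\<in>S. h0 E r B a a') \<le> mX / nA * (mX / nA * (3 * ep * nA^2) + 4 * lam * mX * nA) + 4 * lam * mX^2"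
  proof -
    have "(\<Sum>a\<in>S. H0 E r A B a) \<le> mX / nA * (3 * ep * nA^2) + 4 * lam * mX * nA"
      using x3 HA mX0 nAp by (smt (verit) divide_nonneg_nonneg mult_left_mono)
    then have "mX / nA * (\<Sum>a\<in>S. H0 E r A B a) \<le> mX / nA * (mX / nA * (3 * ep * nA^2) + 4 * lam * mX * nA)"
      using mX0 nAp by (intro mult_left_mono) auto
    then show ?thesis using q2 by linarith
  qed
  also have "\<dots> = (3 * ep + 8 * lam) * mX^2" using nAp by (simp add: power2_eq_square field_simps)
  finally have q3: "(\<Sum>a\<in>S. \<Sum>a'\<in>S. h0 E r B a a') \<le> (3 * ep + 8 * lam) * mX^2" .
  have "QQ E r S T \<le> mY * ((3 * ep + 8 * lam) * mX^2) + 4 * lam * mY * mX^2"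
    using q1 q3 mY0 by (smt (verit) mult_left_mono)
  also have "\<dots> = (3 * ep + 12 * lam) * mX^2 * mY" by (simp add: algebra_simps)
  finally show ?thesis unfolding mX_def mY_def .
qed

lemma GX_fail:
  assumes A: "finite A" and B: "finite B" and A0: "card A > 0" and B0: "card B > 0"
    and mA: "m \<le> card A" and lam: "0 < lam" "lam \<le> 1" and r: "0 \<le> r" "r \<le> 1"
  shows "real (card {S\<in>msub A m. \<not> GX E r A B lam S})
     \<le> (real (card A) + 1 + real (card B)) * cbound lam m * real (card A choose m)"
proof -
  let ?c = "real m / real (card A)"
  define U1 where "U1 = {S\<in>msub A m. \<exists>a\<in>A. \<bar>(\<Sum>a'\<in>S. h0 E r B a a') - ?c * (\<Sum>a'\<in>A. h0 E r B a a')\<bar> > 4 * lam * real m}"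
  define U2 where "U2 = {S\<in>msub A m. \<bar>(\<Sum>a\<in>S. H0 E r A B a / real (card A)) - ?c * (\<Sum>a\<in>A. H0 E r A B a / real (card A))\<bar> > 4 * lam * real m}"
  define U3 where "U3 = {S\<in>msub A m. \<exists>b\<in>B. \<bar>(\<Sum>a\<in>S. ind E a b) - ?c * (\<Sum>a\<in>A. ind E a b)\<bar> > 4 * lam * real m}"
  have sub: "{S\<in>msub A m. \<not> GX E r A B lam S} \<subseteq> U1 \<union> U2 \<union> U3"
  proof
    fix S assume S: "S \<in> {S\<in>msub A m. \<not> GX E r A B lam S}"
    then have cS: "card S = m" and Sm: "S \<in> msub A m" unfolding msub_def by auto
    show "S \<in> U1 \<union> U2 \<union> U3" using S cS Sm unfolding GX_def U1_def U2_def U3_def by (auto simp: not_le)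
  qed
  have fin: "finite (msub A m)" using A by (rule finite_msub)
  have c1: "real (card U1) \<le> real (card A) * cbound lam m * real (card A choose m)"
    unfolding U1_def using h0_range[OF B r B0]
    by (intro conc_multi[OF A A0 mA lam A, where g = "\<lambda>a a'. h0 E r B a a'"]) (auto simp: abs_le_iff)
  have c2: "real (card U2) \<le> cbound lam m * real (card A choose m)"
  proof -
    have Hr: "\<bar>H0 E r A B a / real (card A)\<bar> \<le> 1" for a
    proof -
      have "0 \<le> H0 E r A B a / real (card A)" "H0 E r A B a / real (card A) \<le> 1"
        using H0_range[OF A B r B0 A0] by auto
      then show ?thesis by (intro abs_leI) linarith+
    qed
    show ?thesis unfolding U2_def by (intro conc[OF A A0 mA lam] Hr)
  qed
  have c3: "real (card U3) \<le> real (card B) * cbound lam m * real (card A choose m)"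
    unfolding U3_def
    by (intro conc_multi[OF A A0 mA lam B, where g = "\<lambda>b a. ind E a b"]) (auto simp: ind_def)
  have "real (card {S\<in>msub A m. \<not> GX E r A B lam S}) \<le> real (card (U1 \<union> U2 \<union> U3))"
    using sub fin by (intro of_nat_mono card_mono) (auto simp: U1_def U2_def U3_def)
  also have "\<dots> \<le> real (card U1) + real (card U2) + real (card U3)"
    using card_Un_le[of "U1 \<union> U2" U3] card_Un_le[of U1 U2] by linarith
  also have "\<dots> \<le> (real (card A) + 1 + real (card B)) * cbound lam m * real (card A choose m)"
    using c1 c2 c3 by (simp add: algebra_simps)
  finally show ?thesis .
qed

lemma GY_fail:
  assumes A: "finite A" and B: "finite B" and A0: "card A > 0" and B0: "card B > 0"
    and mB: "m \<le> card B" and lam: "0 < lam" "lam \<le> 1" and r: "0 \<le> r" "r \<le> 1"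
  shows "real (card {T\<in>msub B m. \<not> GY E r A B lam T})
     \<le> (real (card A)^2 + real (card A)) * cbound lam m * real (card B choose m)"
proof -
  let ?c = "real m / real (card B)"
  define U1 where "U1 = {T\<in>msub B m. \<exists>p\<in>A \<times> A. \<bar>(\<Sum>b\<in>T. fv E r (fst p) b * fv E r (snd p) b) - ?c * (\<Sum>b\<in>B. fv E r (fst p) b * fv E r (snd p) b)\<bar> > 4 * lam * real m}"
  define U3 where "U3 = {T\<in>msub B m. \<exists>a\<in>A. \<bar>(\<Sum>b\<in>T. ind E a b) - ?c * (\<Sum>b\<in>B. ind E a b)\<bar> > 4 * lam * real m}"
  have sub: "{T\<in>msub B m. \<not> GY E r A B lam T} \<subseteq> U1 \<union> U3"
  proof
    fix T assume T: "T \<in> {T\<in>msub B m. \<not> GY E r A B lam T}"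
    then have cT: "card T = m" and Tm: "T \<in> msub B m" unfolding msub_def by auto
    show "T \<in> U1 \<union> U3" using T cT Tm unfolding GY_def U1_def U3_def by (auto simp: not_le)
  qed
  have fin: "finite (msub B m)" using B by (rule finite_msub)
  have c1: "real (card U1) \<le> real (card (A \<times> A)) * cbound lam m * real (card B choose m)"
    unfolding U1_def
    by (intro conc_multi[OF B B0 mB lam, where g = "\<lambda>p b. fv E r (fst p) b * fv E r (snd p) b"])
       (use A fv_prod_abs[OF r] in auto)
  have c3: "real (card U3) \<le> real (card A) * cbound lam m * real (card B choose m)"
    unfolding U3_def
    by (intro conc_multi[OF B B0 mB lam A, where g = "\<lambda>a b. ind E a b"]) (auto simp: ind_def)
  have "real (card {T\<in>msub B m. \<not> GY E r A B lam T}) \<le> real (card (U1 \<union> U3))"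
    using sub fin by (intro of_nat_mono card_mono) (auto simp: U1_def U3_def)
  also have "\<dots> \<le> real (card U1) + real (card U3)"
    using card_Un_le[of U1 U3] by linarith
  also have "\<dots> \<le> (real (card A)^2 + real (card A)) * cbound lam m * real (card B choose m)"
    using c1 c3 by (simp add: algebra_simps power2_eq_square card_cartesian_product)
  finally show ?thesis .
qed

lemma cbound_nonneg: "0 \<le> cbound lam m" unfolding cbound_def by simp

lemma marg_bound:
  assumes A: "finite A" and i: "i \<in> {1..s}" and xi: "x i \<le> card A"
    and cnt: "real (card {S\<in>msub A (x i). P S}) \<le> K * real (card A choose x i)"
  shows "real (card {X\<in>collections A s x. P (X i)}) \<le> K * real (card (collections A s x))"
proof -
  have pos: "0 < real (card A choose x i)" using xi by simp
  have "real (card {X\<in>collections A s x. P (X i)}) * real (card A choose x i)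
      = real (card {S\<in>msub A (x i). P S}) * real (card (collections A s x))" by (rule marg[OF A i])
  also have "\<dots> \<le> K * real (card A choose x i) * real (card (collections A s x))"
    using cnt by (intro mult_right_mono) auto
  finally show ?thesis using pos by (simp add: ac_simps mult_le_cancel_left_pos)
qed

lemma main_count:
  fixes A B :: "'a set" and x y :: "nat \<Rightarrow> nat"
  assumes A: "finite A" and B: "finite B" and A0: "card A > 0" and B0: "card B > 0"
    and r: "0 \<le> r" "r \<le> 1" and lam: "0 < lam" "lam \<le> 1"
    and xs: "\<And>i. i \<in> {1..s} \<Longrightarrow> 0 < x i \<and> x i \<le> card A"
    and ys: "\<And>j. j \<in> {1..t} \<Longrightarrow> 0 < y j \<and> y j \<le> card B"
    and bx: "\<And>i. i \<in> {1..s} \<Longrightarrow> cbound lam (x i) \<le> Bnd"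
    and by': "\<And>j. j \<in> {1..t} \<Longrightarrow> cbound lam (y j) \<le> Bnd"
    and W1: "real (card A) + 1 + real (card B) \<le> W" and W2: "real (card A)^2 + real (card A) \<le> W"
    and good: "\<And>S T. S \<subseteq> A \<Longrightarrow> T \<subseteq> B \<Longrightarrow> 0 < card S \<Longrightarrow> 0 < card T
                 \<Longrightarrow> GX E r A B lam S \<Longrightarrow> GY E r A B lam T \<Longrightarrow> Pg S T"
  shows "real (card {p\<in>collections A s x \<times> collections B t y. \<not> (\<forall>i\<in>{1..s}. \<forall>j\<in>{1..t}. Pg (fst p i) (snd p j))})
        \<le> (real s + real t) * W * Bnd * real (card (collections A s x \<times> collections B t y))"
proof -
  let ?CA = "collections A s x"
  let ?CB = "collections B t y"
  define BX where "BX i = {X\<in>?CA. \<not> GX E r A B lam (X i)}" for i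
  define BY where "BY j = {Y\<in>?CB. \<not> GY E r A B lam (Y j)}" for j
  have fCA: "finite ?CA" using A by (rule fin_coll)
  have fCB: "finite ?CB" using B by (rule fin_coll)
  have W0: "0 \<le> W" using W1 by simp
  have sub: "{p\<in>?CA \<times> ?CB. \<not> (\<forall>i\<in>{1..s}. \<forall>j\<in>{1..t}. Pg (fst p i) (snd p j))}
      \<subseteq> (\<Union>i\<in>{1..s}. BX i \<times> ?CB) \<union> (\<Union>j\<in>{1..t}. ?CA \<times> BY j)"
  proof
    fix p assume p: "p \<in> {p\<in>?CA \<times> ?CB. \<not> (\<forall>i\<in>{1..s}. \<forall>j\<in>{1..t}. Pg (fst p i) (snd p j))}"
    then obtain X Y where pXY: "p = (X, Y)" and X: "X \<in> ?CA" and Y: "Y \<in> ?CB" by auto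
    from p obtain i j where i: "i \<in> {1..s}" and j: "j \<in> {1..t}" and np: "\<not> Pg (X i) (Y j)"
      using pXY by auto
    have XiA: "X i \<subseteq> A" "card (X i) = x i" using X i unfolding collections_def by auto
    have YjB: "Y j \<subseteq> B" "card (Y j) = y j" using Y j unfolding collections_def by auto
    have "\<not> GX E r A B lam (X i) \<or> \<not> GY E r A B lam (Y j)"
    proof (rule ccontr)
      assume "\<not> (\<not> GX E r A B lam (X i) \<or> \<not> GY E r A B lam (Y j))"
      then have g1: "GX E r A B lam (X i)" and g2: "GY E r A B lam (Y j)" by auto
      have c1: "0 < card (X i)" using XiA xs[OF i] by simp
      have c2: "0 < card (Y j)" using YjB ys[OF j] by simp
      show False using good[OF XiA(1) YjB(1) c1 c2 g1 g2] np by simp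
    qed
    then show "p \<in> (\<Union>i\<in>{1..s}. BX i \<times> ?CB) \<union> (\<Union>j\<in>{1..t}. ?CA \<times> BY j)"
      using pXY X Y i j unfolding BX_def BY_def by blast
  qed
  have bxc: "real (card (BX i)) \<le> W * Bnd * real (card ?CA)" if i: "i \<in> {1..s}" for i
  proof -
    have xi: "x i \<le> card A" using xs[OF i] by simp
    have "real (card {S\<in>msub A (x i). \<not> GX E r A B lam S})
        \<le> (real (card A) + 1 + real (card B)) * cbound lam (x i) * real (card A choose x i)"
      by (rule GX_fail[OF A B A0 B0 xi lam r])
    also have "\<dots> \<le> W * Bnd * real (card A choose x i)"
      using W1 bx[OF i] cbound_nonneg W0 by (intro mult_right_mono mult_mono) auto
    finally show ?thesis unfolding BX_def by (rule marg_bound[where x=x and i=i, OF A i xi])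
  qed
  have byc: "real (card (BY j)) \<le> W * Bnd * real (card ?CB)" if j: "j \<in> {1..t}" for j
  proof -
    have yj: "y j \<le> card B" using ys[OF j] by simp
    have "real (card {T\<in>msub B (y j). \<not> GY E r A B lam T})
        \<le> (real (card A)^2 + real (card A)) * cbound lam (y j) * real (card B choose y j)"
      by (rule GY_fail[OF A B A0 B0 yj lam r])
    also have "\<dots> \<le> W * Bnd * real (card B choose y j)"
      using W2 by'[OF j] cbound_nonneg W0 by (intro mult_right_mono mult_mono) auto
    finally show ?thesis unfolding BY_def by (rule marg_bound[where x=y and i=j, OF B j yj])
  qed
  have "real (card {p\<in>?CA \<times> ?CB. \<not> (\<forall>i\<in>{1..s}. \<forall>j\<in>{1..t}. Pg (fst p i) (snd p j))})
      \<le> real (card ((\<Union>i\<in>{1..s}. BX i \<times> ?CB) \<union> (\<Union>j\<in>{1..t}. ?CA \<times> BY j)))"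
  proof -
    have "finite ((\<Union>i\<in>{1..s}. BX i \<times> ?CB) \<union> (\<Union>j\<in>{1..t}. ?CA \<times> BY j))"
      using fCA fCB unfolding BX_def BY_def by auto
    then show ?thesis using sub by (intro of_nat_mono card_mono)
  qed
  also have "\<dots> \<le> real (card (\<Union>i\<in>{1..s}. BX i \<times> ?CB)) + real (card (\<Union>j\<in>{1..t}. ?CA \<times> BY j))"
    using card_Un_le[of "\<Union>i\<in>{1..s}. BX i \<times> ?CB" "\<Union>j\<in>{1..t}. ?CA \<times> BY j"]
    by (simp only: of_nat_add[symmetric] of_nat_le_iff)
  also have "\<dots> \<le> (\<Sum>i\<in>{1..s}. real (card (BX i \<times> ?CB))) + (\<Sum>j\<in>{1..t}. real (card (?CA \<times> BY j)))"
  proof (intro add_mono)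
    show "real (card (\<Union>i\<in>{1..s}. BX i \<times> ?CB)) \<le> (\<Sum>i\<in>{1..s}. real (card (BX i \<times> ?CB)))"
      using card_UN_le[of "{1..s}" "\<lambda>i. BX i \<times> ?CB"] by (simp only: of_nat_sum[symmetric] of_nat_le_iff) simp
    show "real (card (\<Union>j\<in>{1..t}. ?CA \<times> BY j)) \<le> (\<Sum>j\<in>{1..t}. real (card (?CA \<times> BY j)))"
      using card_UN_le[of "{1..t}" "\<lambda>j. ?CA \<times> BY j"] by (simp only: of_nat_sum[symmetric] of_nat_le_iff) simp
  qed
  also have "\<dots> \<le> (\<Sum>i\<in>{1..s}. W * Bnd * real (card ?CA) * real (card ?CB)) + (\<Sum>j\<in>{1..t}. W * Bnd * real (card ?CA) * real (card ?CB))"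
  proof (intro add_mono sum_mono)
    fix i assume "i \<in> {1..s}"
    then show "real (card (BX i \<times> ?CB)) \<le> W * Bnd * real (card ?CA) * real (card ?CB)"
      using bxc by (simp add: card_cartesian_product mult_right_mono)
  next
    fix j assume j: "j \<in> {1..t}"
    have "real (card ?CA) * real (card (BY j)) \<le> real (card ?CA) * (W * Bnd * real (card ?CB))"
      using byc[OF j] by (intro mult_left_mono) auto
    then show "real (card (?CA \<times> BY j)) \<le> W * Bnd * real (card ?CA) * real (card ?CB)"
      by (simp add: card_cartesian_product ac_simps)
  qed
  also have "\<dots> = (real s + real t) * W * Bnd * real (card (?CA \<times> ?CB))"
    by (simp add: card_cartesian_product algebra_simps)
  finally show ?thesis .
qed

lemma asym:
  fixes a C0 :: real
  assumes a: "0 < a" and C0: "0 \<le> C0"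
  shows "\<exists>N::nat. \<forall>n\<ge>N. C0 * (real n + 1)^2 \<le> exp (a * real n)"
proof -
  define N where "N = nat \<lceil>108 * C0 / a^3\<rceil> + 1"
  have "\<forall>n\<ge>N. C0 * (real n + 1)^2 \<le> exp (a * real n)"
  proof (intro allI impI)
    fix n assume n: "N \<le> n"
    have n1: "1 \<le> real n" using n unfolding N_def by simp
    have nb: "108 * C0 / a^3 \<le> real n" using n unfolding N_def by linarith
    have a3: "0 < a^3" using a by simp
    have nb2: "108 * C0 \<le> a^3 * real n" using nb a3 by (simp add: field_simps)
    have y: "a * real n / 3 \<le> exp (a * real n / 3)"
      using exp_ge_add_one_self[of "a * real n / 3"] by linarith
    have "(a * real n / 3)^3 \<le> exp (a * real n / 3)^3"
      using y a n1 by (intro power_mono) auto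
    also have "exp (a * real n / 3)^3 = exp (a * real n)"
      using exp_of_nat_mult[of 3 "a * real n / 3"] by simp
    finally have e3: "(a * real n / 3)^3 \<le> exp (a * real n)" .
    have sq: "(real n + 1)^2 \<le> 4 * (real n)^2"
    proof -
      have h: "1 * real n \<le> real n * real n" using mult_right_mono[OF n1, of "real n"] by simp
      have "(real n + 1)^2 = real n * real n + 2 * real n + 1" by (simp add: power2_eq_square algebra_simps)
      moreover have "4 * (real n)^2 = 4 * (real n * real n)" by (simp add: power2_eq_square)
      ultimately show ?thesis using h n1 by linarith
    qed
    have "C0 * (real n + 1)^2 \<le> C0 * (4 * (real n)^2)"
      using sq C0 by (rule mult_left_mono)
    also have "\<dots> = (108 * C0) * (real n)^2 / 27" by simp
    also have "\<dots> \<le> (a^3 * real n) * (real n)^2 / 27"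
      using nb2 by (intro divide_right_mono mult_right_mono) auto
    also have "\<dots> = (a * real n / 3)^3" by (simp add: power3_eq_cube power2_eq_square)
    finally show "C0 * (real n + 1)^2 \<le> exp (a * real n)" using e3 by linarith
  qed
  then show ?thesis by blast
qed

lemma epsp:
  fixes ep :: real
  assumes "0 < ep" "ep \<le> 1/4"
  shows "0 < (33 * ep) powr (1/5)" "((33 * ep) powr (1/5))^5 = 33 * ep" "5 * ep \<le> (33 * ep) powr (1/5)"
proof -
  have p: "0 < 33 * ep" using assms by simp
  show "0 < (33 * ep) powr (1/5)" using p by simp
  have "((33 * ep) powr (1/5))^5 = ((33 * ep) powr (1/5)) powr (real 5)"
    using p by (simp add: powr_realpow)
  also have "\<dots> = 33 * ep" using p by (simp add: powr_powr abs_of_pos)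
  finally show e5: "((33 * ep) powr (1/5))^5 = 33 * ep" .
  have "ep^4 \<le> (1/4)^4" using assms by (intro power_mono) auto
  moreover have "(1/4::real)^4 = 1/256" by (simp add: power_one_over)
  ultimately have h4: "3125 * ep^4 \<le> 33" by linarith
  have "(5 * ep)^5 = (3125 * ep^4) * ep" by (simp add: eval_nat_numeral algebra_simps)
  also have "\<dots> \<le> 33 * ep" using h4 assms by (intro mult_right_mono) auto
  finally have "(5 * ep)^5 \<le> 33 * ep" .
  then have "(5 * ep)^5 \<le> ((33 * ep) powr (1/5))^5" using e5 by simp
  then have "(5 * ep)^Suc 4 \<le> ((33 * ep) powr (1/5))^Suc 4" by (simp add: eval_nat_numeral)
  then show "5 * ep \<le> (33 * ep) powr (1/5)"
    by (rule power_le_imp_le_base) (use p in simp)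
qed

lemma good_reg:
  assumes A: "finite A" and B: "finite B" and A0: "card A > 0" and B0: "card B > 0"
    and ep: "0 < ep" and r: "0 \<le> r" "r \<le> 1" and reg: "regular_pair E A B r ep"
    and lam: "0 \<le> lam" and ep': "0 < ep'" and budget: "3 * ep + 12 * lam \<le> ep'^5"
    and S: "S \<subseteq> A" and T: "T \<subseteq> B" and S0: "0 < card S" and T0: "0 < card T"
    and gx: "GX E r A B lam S" and gy: "GY E r A B lam T"
  shows "regular_pair E S T r ep'"
proof -
  have fS: "finite S" and fT: "finite T" using S T A B finite_subset by blast+
  show ?thesis
    by (rule reg_from_Q[OF fS fT ep' S0 T0 Qsample[OF A B A0 B0 ep r reg S T lam gx gy] budget])
qed

lemma good_degY:
  assumes B: "finite B" and B0: "card B > 0" and T: "T \<subseteq> B" and a: "a \<in> A"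
    and gy: "GY E r A B lam T" and deg: "real (card {b\<in>B. E a b}) \<ge> (d - ep) * real (card B)"
  shows "real (card {b\<in>T. E a b}) \<ge> (d - ep - 4 * lam) * real (card T)"
proof -
  have fT: "finite T" using T B finite_subset by blast
  have g: "\<bar>(\<Sum>b\<in>T. ind E a b) - real (card T) / real (card B) * (\<Sum>b\<in>B. ind E a b)\<bar> \<le> 4 * lam * real (card T)"
    using gy a unfolding GY_def by blast
  have "real (card T) / real (card B) * ((d - ep) * real (card B)) \<le> real (card T) / real (card B) * (\<Sum>b\<in>B. ind E a b)"
    using deg card_nbr[OF B, of E a] by (intro mult_left_mono) auto
  moreover have "real (card T) / real (card B) * ((d - ep) * real (card B)) = (d - ep) * real (card T)"
    using B0 by simp
  ultimately have "(d - ep) * real (card T) - 4 * lam * real (card T) \<le> (\<Sum>b\<in>T. ind E a b)"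
    using g by (simp add: abs_le_iff)
  then show ?thesis using card_nbr[OF fT, of E a] by (simp add: algebra_simps)
qed

lemma good_degX:
  assumes A: "finite A" and A0: "card A > 0" and S: "S \<subseteq> A" and b: "b \<in> B"
    and gx: "GX E r A B lam S" and deg: "real (card {a\<in>A. E a b}) \<ge> (d - ep) * real (card A)"
  shows "real (card {a\<in>S. E a b}) \<ge> (d - ep - 4 * lam) * real (card S)"
proof -
  have fS: "finite S" using S A finite_subset by blast
  have g: "\<bar>(\<Sum>a\<in>S. ind E a b) - real (card S) / real (card A) * (\<Sum>a\<in>A. ind E a b)\<bar> \<le> 4 * lam * real (card S)"
    using gx b unfolding GX_def by blast
  have "real (card S) / real (card A) * ((d - ep) * real (card A)) \<le> real (card S) / real (card A) * (\<Sum>a\<in>A. ind E a b)"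
    using deg card_nbr2[OF A, of E b] by (intro mult_left_mono) auto
  moreover have "real (card S) / real (card A) * ((d - ep) * real (card A)) = (d - ep) * real (card S)"
    using A0 by simp
  ultimately have "(d - ep) * real (card S) - 4 * lam * real (card S) \<le> (\<Sum>a\<in>S. ind E a b)"
    using g by (simp add: abs_le_iff)
  then show ?thesis using card_nbr2[OF fS, of E b] by (simp add: algebra_simps)
qed

lemma dens_le1:
  assumes "finite X" "finite Y" shows "dens E X Y \<le> 1"
proof -
  have "edges_between E X Y \<subseteq> X \<times> Y" unfolding edges_between_def by auto
  then have "card (edges_between E X Y) \<le> card X * card Y"
    using assms by (metis card_cartesian_product card_mono finite_cartesian_product)
  then have "real (card (edges_between E X Y)) \<le> real (card X) * real (card Y)"
    by (metis of_nat_le_iff of_nat_mult)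
  then show ?thesis unfolding dens_def
    by (cases "real (card X) * real (card Y) = 0") (auto simp: divide_le_eq_1)
qed

lemma reg_min1:
  assumes A: "finite A" and B: "finite B" and reg: "regular_pair E A B d' ep"
  shows "regular_pair E A B (min d' 1) ep"
  unfolding regular_pair_def
proof (intro allI impI)
  fix X Y assume XA: "X \<subseteq> A" and YB: "Y \<subseteq> B" and cX: "ep * real (card A) \<le> real (card X)"
    and cY: "ep * real (card B) \<le> real (card Y)"
  have h: "d' - ep \<le> dens E X Y \<and> dens E X Y \<le> d' + ep" using reg XA YB cX cY unfolding regular_pair_def by blast
  have "dens E X Y \<le> 1" using XA YB A B finite_subset dens_le1 by metis
  then show "min d' 1 - ep \<le> dens E X Y \<and> dens E X Y \<le> min d' 1 + ep"
    using h by (cases "d' \<le> 1") (auto simp: min_def)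
qed

lemma prob_bound:
  assumes U: "finite U" "U \<noteq> {}" and bad: "real (card {z\<in>U. \<not> P z}) \<le> F * real (card U)"
  shows "unif_prob U P \<ge> 1 - F"
proof -
  have cU: "0 < real (card U)" using U by (simp add: card_gt_0_iff)
  have "card {z\<in>U. P z} + card {z\<in>U. \<not> P z} = card U"
  proof -
    have "{z\<in>U. P z} \<union> {z\<in>U. \<not> P z} = U" by auto
    moreover have "card ({z\<in>U. P z} \<union> {z\<in>U. \<not> P z}) = card {z\<in>U. P z} + card {z\<in>U. \<not> P z}"
      using U by (intro card_Un_disjoint) auto
    ultimately show ?thesis by simp
  qed
  then have e: "real (card {z\<in>U. P z}) = real (card U) - real (card {z\<in>U. \<not> P z})" by (simp add: algebra_simps
    flip: of_nat_add)
  have "1 - F \<le> (real (card U) - real (card {z\<in>U. \<not> P z})) / real (card U)"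
    using bad cU by (simp add: field_simps)
  then show ?thesis unfolding unif_prob_def e .
qed

lemma count_le:
  fixes x :: "nat \<Rightarrow> nat" and beta :: real
  assumes xs: "\<forall>i\<in>{1..s}. 0 < x i \<and> real (x i) \<ge> beta * real n"
    and sx: "(\<Sum>i=1..s. x i) \<le> cA" and cA: "cA \<le> n" and b: "0 < beta" and n: "1 \<le> n"
  shows "real s \<le> 1 / beta"
proof -
  have "real s * (beta * real n) = (\<Sum>i=1..s. beta * real n)" by simp
  also have "\<dots> \<le> (\<Sum>i=1..s. real (x i))" using xs by (intro sum_mono) auto
  also have "\<dots> = real (\<Sum>i=1..s. x i)" by simp
  also have "\<dots> \<le> real n" using sx cA by linarith
  finally have h: "real s * (beta * real n) \<le> real n" .
  have np: "0 < real n" using n by simp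
  have "real s * beta \<le> 1"
  proof -
    have "(real s * beta) * real n \<le> 1 * real n" using h by (simp add: ac_simps)
    then show ?thesis using np by (simp only: mult_le_cancel_right_pos)
  qed
  then show ?thesis using b by (simp add: field_simps)
qed

lemma xi_le:
  fixes x :: "nat \<Rightarrow> nat"
  assumes "i \<in> {1..s}" "(\<Sum>i=1..s. x i) \<le> cA"
  shows "x i \<le> cA"
proof -
  have "x i \<le> (\<Sum>i=1..s. x i)" using assms(1) by (intro member_le_sum) auto
  then show ?thesis using assms(2) by simp
qed

lemma instance_bound:
  fixes E :: "'a \<Rightarrow> 'a \<Rightarrow> bool" and A B :: "'a set" and x y :: "nat \<Rightarrow> nat" and Pg
    and beta ep :: real
  assumes b: "0 < beta" and e: "0 < ep" "ep \<le> 1" and n1: "1 \<le> n"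
    and A: "finite A" and B: "finite B" and An: "card A \<le> n" and Bn: "card B \<le> n"
    and xs: "\<forall>i\<in>{1..s}. 0 < x i \<and> real (x i) \<ge> beta * real n"
    and ys: "\<forall>j\<in>{1..t}. 0 < y j \<and> real (y j) \<ge> beta * real n"
    and sx: "(\<Sum>i=1..s. x i) \<le> card A" and sy: "(\<Sum>j=1..t. y j) \<le> card B"
    and r: "0 \<le> r" "r \<le> 1"
    and asy: "4 * real (nat \<lceil>1 / ep\<rceil>) * exp 1 / beta * (real n + 1)^2 \<le> exp (ep^2 * beta / 16 * real n)"
    and good: "\<And>S T. S \<subseteq> A \<Longrightarrow> T \<subseteq> B \<Longrightarrow> 0 < card S \<Longrightarrow> 0 < card T
                 \<Longrightarrow> GX E r A B ep S \<Longrightarrow> GY E r A B ep T \<Longrightarrow> Pg S T"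
  shows "unif_prob (collections A s x \<times> collections B t y)
           (\<lambda>(X, Y). \<forall>i\<in>{1..s}. \<forall>j\<in>{1..t}. Pg (X i) (Y j))
         \<ge> 1 - exp (- (ep^2 * beta / 16) * real n)"
proof -
  let ?U = "collections A s x \<times> collections B t y"
  define a where "a = ep^2 * beta / 16"
  have a0: "0 < a" unfolding a_def using e b by simp
  have eqP: "(\<lambda>(X, Y). \<forall>i\<in>{1..s}. \<forall>j\<in>{1..t}. Pg (X i) (Y j))
      = (\<lambda>p. \<forall>i\<in>{1..s}. \<forall>j\<in>{1..t}. Pg (fst p i) (snd p j))" by (auto simp: fun_eq_iff)
  have fU: "finite ?U" using fin_coll[OF A] fin_coll[OF B] by simp
  have neU: "?U \<noteq> {}" using ne_coll[OF A sx] ne_coll[OF B sy] by simp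
  have cU0: "0 \<le> real (card ?U)" by simp
  have main: "real (card {p\<in>?U. \<not> (\<forall>i\<in>{1..s}. \<forall>j\<in>{1..t}. Pg (fst p i) (snd p j))})
      \<le> exp (- a * real n) * real (card ?U)"
  proof (cases "s = 0 \<or> t = 0")
    case True
    then have "\<forall>p. (\<forall>i\<in>{1..s}. \<forall>j\<in>{1..t}. Pg (fst p i) (snd p j))" by auto
    then have e0: "{p\<in>?U. \<not> (\<forall>i\<in>{1..s}. \<forall>j\<in>{1..t}. Pg (fst p i) (snd p j))} = {}" by blast
    show ?thesis unfolding e0 by simp
  next
    case False
    then have s1: "1 \<in> {1..s}" and t1: "1 \<in> {1..t}" by auto
    have A0: "card A > 0"
    proof -
      have "0 < x 1" using xs s1 by blast
      then show ?thesis using xi_le[OF s1 sx] by linarith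
    qed
    have B0: "card B > 0"
    proof -
      have "0 < y 1" using ys t1 by blast
      then show ?thesis using xi_le[OF t1 sy] by linarith
    qed
    define K where "K = real (nat \<lceil>1 / ep\<rceil>)"
    define Bnd where "Bnd = 2 * K * exp (1 - ep^2 * (beta * real n) / 8)"
    define W where "W = (real n + 1)^2"
    have K0: "0 \<le> K" unfolding K_def by simp
    have cb: "cbound ep m \<le> Bnd" if "beta * real n \<le> real m" for m
    proof -
      have "ep^2 * (beta * real n) \<le> ep^2 * real m" using that by (intro mult_left_mono) auto
      then have "exp (1 - ep^2 * real m / 8) \<le> exp (1 - ep^2 * (beta * real n) / 8)" by simp
      then show ?thesis unfolding cbound_def Bnd_def K_def by (intro mult_left_mono) auto
    qed
    have W1: "real (card A) + 1 + real (card B) \<le> W"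
    proof -
      have "real (card A) + 1 + real (card B) \<le> 2 * real n + 1" using An Bn by linarith
      also have "\<dots> \<le> W" unfolding W_def by (simp add: power2_eq_square algebra_simps)
      finally show ?thesis .
    qed
    have W2: "real (card A)^2 + real (card A) \<le> W"
    proof -
      have "real (card A)^2 \<le> (real n)^2" using An by (intro power_mono) auto
      then show ?thesis unfolding W_def using An by (simp add: power2_eq_square algebra_simps)
    qed
    have mc: "real (card {p\<in>?U. \<not> (\<forall>i\<in>{1..s}. \<forall>j\<in>{1..t}. Pg (fst p i) (snd p j))})
        \<le> (real s + real t) * W * Bnd * real (card ?U)"
    proof (rule main_count[OF A B A0 B0 r e _ _ _ _ W1 W2 good])
      fix i assume i: "i \<in> {1..s}"
      show "0 < x i \<and> x i \<le> card A" using xs i xi_le[OF i sx] by auto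
      show "cbound ep (x i) \<le> Bnd" using xs i by (intro cb) auto
    next
      fix j assume j: "j \<in> {1..t}"
      show "0 < y j \<and> y j \<le> card B" using ys j xi_le[OF j sy] by auto
      show "cbound ep (y j) \<le> Bnd" using ys j by (intro cb) auto
    qed
    have st: "real s + real t \<le> 2 / beta"
      using count_le[OF xs sx An b n1] count_le[OF ys sy Bn b n1] by simp
    have "(real s + real t) * W * Bnd \<le> (2 / beta) * W * Bnd"
      using st unfolding W_def Bnd_def using K0 by (intro mult_right_mono) auto
    also have "\<dots> = (4 * K * exp 1 / beta * (real n + 1)^2) * exp (- (2 * a) * real n)"
    proof -
      have ee: "exp (1 - ep^2 * (beta * real n) / 8) = exp 1 * exp (- (2 * a) * real n)"
        unfolding a_def exp_add[symmetric] by (rule arg_cong[where f=exp]) (simp add: field_simps)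
      show ?thesis unfolding Bnd_def ee W_def using b by (simp add: field_simps)
    qed
    also have "\<dots> \<le> exp (a * real n) * exp (- (2 * a) * real n)"
      using asy unfolding K_def a_def by (intro mult_right_mono) auto
    also have "\<dots> = exp (- a * real n)" by (simp add: exp_add[symmetric] algebra_simps)
    finally have "(real s + real t) * W * Bnd \<le> exp (- a * real n)" .
    then show ?thesis using mc cU0 by (smt (verit) mult_right_mono)
  qed
  show ?thesis unfolding eqP a_def[symmetric]
    by (rule prob_bound[OF fU neU]) (use main in simp)
qed

lemma main_lemma:
  fixes d \<beta> \<epsilon> :: real
  assumes d: "0 < d" "d \<le> 1" and b: "0 < \<beta>" "\<beta> \<le> 1/4" and e: "0 < \<epsilon>" "\<epsilon> \<le> 1/4"
  shows "\<exists>c>0. \<exists>N::nat. \<forall>n\<ge>N.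
        \<forall>(E :: nat \<Rightarrow> nat \<Rightarrow> bool) A B s t (x :: nat \<Rightarrow> nat) (y :: nat \<Rightarrow> nat).
          finite A \<and> finite B \<and> A \<inter> B = {} \<and> card A \<le> n \<and> card B \<le> n \<and>
          (\<forall>i\<in>{1..s}. 0 < x i \<and> real (x i) \<ge> \<beta> * real n) \<and>
          (\<forall>j\<in>{1..t}. 0 < y j \<and> real (y j) \<ge> \<beta> * real n) \<and>
          (\<Sum>i=1..s. x i) \<le> card A \<and> (\<Sum>j=1..t. y j) \<le> card B \<longrightarrow>
          (super_regular_pair E A B d \<epsilon> \<longrightarrow>
             unif_prob (collections A s x \<times> collections B t y)
               (\<lambda>(X, Y). \<forall>i\<in>{1..s}. \<forall>j\<in>{1..t}.
                  super_regular_pair E (X i) (Y j) d ((33 * \<epsilon>) powr (1/5)))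
             \<ge> 1 - exp (- c * real n)) \<and>
          (regular_pair E A B d \<epsilon> \<longrightarrow>
             unif_prob (collections A s x \<times> collections B t y)
               (\<lambda>(X, Y). \<forall>i\<in>{1..s}. \<forall>j\<in>{1..t}.
                  regular_pair E (X i) (Y j) d ((33 * \<epsilon>) powr (1/5)))
             \<ge> 1 - exp (- c * real n))"
proof -
  define a where "a = \<epsilon>^2 * \<beta> / 16"
  define C0 where "C0 = 4 * real (nat \<lceil>1 / \<epsilon>\<rceil>) * exp 1 / \<beta>"
  have a0: "0 < a" unfolding a_def using e b by simp
  have C00: "0 \<le> C0" unfolding C0_def using b by simp
  obtain N0 where N0: "\<forall>n\<ge>N0. C0 * (real n + 1)^2 \<le> exp (a * real n)" using asym[OF a0 C00] by blast
  define N where "N = max N0 1"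
  define ep' where "ep' = (33 * \<epsilon>) powr (1/5)"
  have e1: "\<epsilon> \<le> 1" using e by simp
  have ep'0: "0 < ep'" and ep'5: "ep'^5 = 33 * \<epsilon>" and ep'e: "5 * \<epsilon> \<le> ep'"
    unfolding ep'_def using epsp[OF e] by auto
  have budget: "3 * \<epsilon> + 12 * \<epsilon> \<le> ep'^5" using ep'5 e by simp
  have inst: "\<And>n. N \<le> n \<Longrightarrow> 4 * real (nat \<lceil>1 / \<epsilon>\<rceil>) * exp 1 / \<beta> * (real n + 1)^2 \<le> exp (\<epsilon>^2 * \<beta> / 16 * real n)"
    using N0 unfolding N_def C0_def a_def by auto
  show ?thesis
    apply (rule exI[where x=a])
    apply (intro conjI exI[where x=N] allI impI)
      apply (rule a0)
    subgoal premises prems for n E A B s t x y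
    proof -
      from prems have n: "N \<le> n" and H: "finite A" "finite B" "card A \<le> n" "card B \<le> n"
        "\<forall>i\<in>{1..s}. 0 < x i \<and> real (x i) \<ge> \<beta> * real n"
        "\<forall>j\<in>{1..t}. 0 < y j \<and> real (y j) \<ge> \<beta> * real n"
        "(\<Sum>i=1..s. x i) \<le> card A" "(\<Sum>j=1..t. y j) \<le> card B"
        and sr: "super_regular_pair E A B d \<epsilon>" by auto
      have n1: "1 \<le> n" using n unfolding N_def by simp
      obtain d' where d': "d' \<ge> d" "regular_pair E A B d' \<epsilon>"
        using sr unfolding super_regular_pair_def regular_pair_ge_def by blast
      define r where "r = min d' 1"
      have r: "0 \<le> r" "r \<le> 1" "d \<le> r" unfolding r_def using d d' by auto
      have reg: "regular_pair E A B r \<epsilon>" unfolding r_def by (rule reg_min1[OF H(1,2) d'(2)])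
      have degA: "\<forall>a\<in>A. real (card {b\<in>B. E a b}) \<ge> (d - \<epsilon>) * real (card B)"
        and degB: "\<forall>b\<in>B. real (card {a\<in>A. E a b}) \<ge> (d - \<epsilon>) * real (card A)"
        using sr unfolding super_regular_pair_def by auto
      have "unif_prob (collections A s x \<times> collections B t y)
           (\<lambda>(X, Y). \<forall>i\<in>{1..s}. \<forall>j\<in>{1..t}. super_regular_pair E (X i) (Y j) d ep')
         \<ge> 1 - exp (- (\<epsilon>^2 * \<beta> / 16) * real n)"
      proof (rule instance_bound[OF b(1) e(1) e1 n1 H r(1,2) inst[OF n]])
        fix S T assume S: "S \<subseteq> A" and T: "T \<subseteq> B" and S0: "0 < card S" and T0: "0 < card T"
          and gx: "GX E r A B \<epsilon> S" and gy: "GY E r A B \<epsilon> T"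
        have A0: "0 < card A" using S S0 H(1) card_mono[OF H(1) S] by linarith
        have B0: "0 < card B" using T T0 H(2) card_mono[OF H(2) T] by linarith
        have rg: "regular_pair E S T r ep'"
          by (rule good_reg[OF H(1,2) A0 B0 e(1) r(1,2) reg _ ep'0 budget S T S0 T0 gx gy]) (use e in simp)
        have dY: "\<forall>a\<in>S. real (card {b\<in>T. E a b}) \<ge> (d - ep') * real (card T)"
        proof
          fix a assume aS: "a \<in> S"
          then have aA: "a \<in> A" using S by auto
          have "real (card {b\<in>T. E a b}) \<ge> (d - \<epsilon> - 4 * \<epsilon>) * real (card T)"
            by (rule good_degY[OF H(2) B0 T aA gy]) (use degA aA in auto)
          moreover have "(d - ep') * real (card T) \<le> (d - \<epsilon> - 4 * \<epsilon>) * real (card T)"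
            using ep'e by (intro mult_right_mono) auto
          ultimately show "real (card {b\<in>T. E a b}) \<ge> (d - ep') * real (card T)" by linarith
        qed
        have dX: "\<forall>b\<in>T. real (card {a\<in>S. E a b}) \<ge> (d - ep') * real (card S)"
        proof
          fix b assume bT: "b \<in> T"
          then have bB: "b \<in> B" using T by auto
          have "real (card {a\<in>S. E a b}) \<ge> (d - \<epsilon> - 4 * \<epsilon>) * real (card S)"
            by (rule good_degX[OF H(1) A0 S bB gx]) (use degB bB in auto)
          moreover have "(d - ep') * real (card S) \<le> (d - \<epsilon> - 4 * \<epsilon>) * real (card S)"
            using ep'e by (intro mult_right_mono) auto
          ultimately show "real (card {a\<in>S. E a b}) \<ge> (d - ep') * real (card S)" by linarith
        qed
        show "super_regular_pair E S T d ep'"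
          unfolding super_regular_pair_def regular_pair_ge_def using rg r(3) dX dY by blast
      qed
      then show ?thesis unfolding ep'_def a_def by simp
    qed
    subgoal premises prems for n E A B s t x y
    proof -
      from prems have n: "N \<le> n" and H: "finite A" "finite B" "card A \<le> n" "card B \<le> n"
        "\<forall>i\<in>{1..s}. 0 < x i \<and> real (x i) \<ge> \<beta> * real n"
        "\<forall>j\<in>{1..t}. 0 < y j \<and> real (y j) \<ge> \<beta> * real n"
        "(\<Sum>i=1..s. x i) \<le> card A" "(\<Sum>j=1..t. y j) \<le> card B"
        and reg: "regular_pair E A B d \<epsilon>" by auto
      have n1: "1 \<le> n" using n unfolding N_def by simp
      have r: "0 \<le> d" "d \<le> 1" using d by auto
      have "unif_prob (collections A s x \<times> collections B t y)
           (\<lambda>(X, Y). \<forall>i\<in>{1..s}. \<forall>j\<in>{1..t}. regular_pair E (X i) (Y j) d ep')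
         \<ge> 1 - exp (- (\<epsilon>^2 * \<beta> / 16) * real n)"
      proof (rule instance_bound[OF b(1) e(1) e1 n1 H r inst[OF n]])
        fix S T assume S: "S \<subseteq> A" and T: "T \<subseteq> B" and S0: "0 < card S" and T0: "0 < card T"
          and gx: "GX E d A B \<epsilon> S" and gy: "GY E d A B \<epsilon> T"
        have A0: "0 < card A" using S S0 H(1) card_mono[OF H(1) S] by linarith
        have B0: "0 < card B" using T T0 H(2) card_mono[OF H(2) T] by linarith
        show "regular_pair E S T d ep'"
          by (rule good_reg[OF H(1,2) A0 B0 e(1) r reg _ ep'0 budget S T S0 T0 gx gy]) (use e in simp)
      qed
      then show ?thesis unfolding ep'_def a_def by simp
    qed
    done
qed

theorem lemma2p4:
  shows "\<forall>d::real. 0 < d \<and> d \<le> 1 \<longrightarrow>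
    (\<exists>\<delta>>0. \<forall>\<beta> \<epsilon>::real. 0 < \<beta> \<and> \<beta> \<le> \<delta> \<and> 0 < \<epsilon> \<and> \<epsilon> \<le> \<delta> \<longrightarrow>
      (\<exists>c>0. \<exists>N::nat. \<forall>n\<ge>N.
        \<forall>(E :: nat \<Rightarrow> nat \<Rightarrow> bool) A B s t (x :: nat \<Rightarrow> nat) (y :: nat \<Rightarrow> nat).
          finite A \<and> finite B \<and> A \<inter> B = {} \<and> card A \<le> n \<and> card B \<le> n \<and>
          (\<forall>i\<in>{1..s}. 0 < x i \<and> real (x i) \<ge> \<beta> * real n) \<and>
          (\<forall>j\<in>{1..t}. 0 < y j \<and> real (y j) \<ge> \<beta> * real n) \<and>
          (\<Sum>i=1..s. x i) \<le> card A \<and> (\<Sum>j=1..t. y j) \<le> card B \<longrightarrow>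
          (super_regular_pair E A B d \<epsilon> \<longrightarrow>
             unif_prob (collections A s x \<times> collections B t y)
               (\<lambda>(X, Y). \<forall>i\<in>{1..s}. \<forall>j\<in>{1..t}.
                  super_regular_pair E (X i) (Y j) d ((33 * \<epsilon>) powr (1/5)))
             \<ge> 1 - exp (- c * real n)) \<and>
          (regular_pair E A B d \<epsilon> \<longrightarrow>
             unif_prob (collections A s x \<times> collections B t y)
               (\<lambda>(X, Y). \<forall>i\<in>{1..s}. \<forall>j\<in>{1..t}.
                  regular_pair E (X i) (Y j) d ((33 * \<epsilon>) powr (1/5)))
             \<ge> 1 - exp (- c * real n))))"
  apply (intro allI impI)
  apply (rule exI[where x="1/4"])
  apply (intro conjI allI impI)
   apply simp
  subgoal premises prems for d \<beta> \<epsilon>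
    using main_lemma[of d \<beta> \<epsilon>] prems by simp
  done

end
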